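(* For every $j\in\{0,\dots,m-1\}$ and every $k\ge1$, $$\mathcal L_\Delta^{k}(h_j)=\Big(\int_{\Omega_{j+k \bmod m}}\mathcal L_\Delta^{k}(\mathbf 1)\,d\nu_{j+k \bmod m}\Big)\,h_{j+k \bmod m}.$$
   Context: Let $\mathcal V=\{1,\dots,\ell\}$ and let $A$ be an irreducible aperiodic $\{0,1\}$-matrix. Let $\Sigma_A^+=\{x\in\mathcal V^{\mathbb N}: A(x_{i-1},x_i)=1\ \forall i\ge1\}$ with the shift $T(x)_n=x_{n+1}$. Potential. Let $\phi$ be a real Hölder continuous function, normalised so that $\mathcal L_\phi\mathbf 1=\mathbf 1$, where $(\mathcal L_\phi\psi)(x)=\sum_{Ty=x}e^{\phi(y)}\psi(y)$. Subsystem. Let $\Delta\subsetneq\mathcal V$ with $\Sigma_\Delta=\{x: x_i\in\Delta\ \forall i\}$, such that the restriction of $A$ to $\Delta\times\Delta$ is irreducible with period $m\ge2$. Let $\Delta=\Delta_0\cup\dots\cup\Delta_{m-1}$ be the cyclic decomposition into disjoint sets such that $i\in\Delta_s$, $i'\in\Delta_{s'}$ and $A(i,i')=1$ imply $s'\equiv s+1\pmod m$. Indices are taken mod $m$. Define $\Omega_j=\{x\in\Sigma_\Delta: x_0\in\Delta_j\}$. Let $P_\Delta$ be the pressure of $\phi|_{\Sigma_\Delta}$ with respect to $T|_{\Sigma_\Delta}$. Operators. Define $\mathcal L_\Delta\psi=\mathcal L_\phi(\psi\chi_\Delta)$, where $\chi_\Delta$ is the indicator of $\{x_0\in\Delta\}$.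 Write $S_m\phi=\sum_{i=0}^{m-1}\phi\circ T^i$, and define $(\mathcal L^{(m)}_j\psi)(x)=\sum e^{S_m\phi(y)}\psi(y)$ over $y$ with $T^my=x$ and $y_s\in\Delta_{j+s}$ for $0\le s\le m-1$. Functions $h_j$. Let $h_j=\lim_n e^{-nmP_\Delta}(\mathcal L^{(m)}_j)^n\mathbf 1$ (a uniform limit on $\Sigma_A^+$). Measures $\nu_j$. Let $\nu_j$ be the unique Borel probability supported on $\Omega_j$ with $\int\mathcal L^{(m)}_j\psi\,d\nu_j=e^{mP_\Delta}\int\psi\,d\nu_j$ for all continuous $\psi$. *)

theory Defs
  imports "HOL-Analysis.Analysis" "HOL-Probability.Probability_Measure"
begin

text \<open>Points of the one-sided shift are sequences nat => nat (product topology, discrete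
  coordinates, from HOL-Analysis Function_Topology). The alphabet is a set S of natural
  numbers; the transition matrix A is a Boolean matrix (A i j = True iff A(i,j) = 1).\<close>

definition shift :: "(nat \<Rightarrow> nat) \<Rightarrow> (nat \<Rightarrow> nat)" where
  "shift x = (\<lambda>n. x (Suc n))"

definition Sigma_sub :: "nat set \<Rightarrow> (nat \<Rightarrow> nat \<Rightarrow> bool) \<Rightarrow> (nat \<Rightarrow> nat) set" where
  "Sigma_sub S A = {x. (\<forall>i. x i \<in> S) \<and> (\<forall>i. A (x i) (x (Suc i)))}"

definition adj :: "nat set \<Rightarrow> (nat \<Rightarrow> nat \<Rightarrow> bool) \<Rightarrow> (nat \<times> nat) set" where
  "adj S A = {(i, j). i \<in> S \<and> j \<in> S \<and> A i j}"

definition irreducible_on :: "nat set \<Rightarrow> (nat \<Rightarrow> nat \<Rightarrow> bool) \<Rightarrow> bool" where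
  "irreducible_on S A \<longleftrightarrow> (\<forall>i\<in>S. \<forall>j\<in>S. \<exists>n>0. (i, j) \<in> adj S A ^^ n)"

definition period :: "nat set \<Rightarrow> (nat \<Rightarrow> nat \<Rightarrow> bool) \<Rightarrow> nat \<Rightarrow> nat" where
  "period S A i = Gcd {n. n > 0 \<and> (i, i) \<in> adj S A ^^ n}"

definition cyclic_decomposition ::
  "nat set \<Rightarrow> (nat \<Rightarrow> nat \<Rightarrow> bool) \<Rightarrow> (nat \<Rightarrow> nat set) \<Rightarrow> nat \<Rightarrow> bool" where
  "cyclic_decomposition S A D m \<longleftrightarrow>
     (\<Union>s<m. D s) = S \<and>
     (\<forall>s<m. \<forall>s'<m. s \<noteq> s' \<longrightarrow> D s \<inter> D s' = {}) \<and>
     (\<forall>s<m. \<forall>s'<m. \<forall>i\<in>D s. \<forall>i'\<in>D s'. A i i' \<longrightarrow> s' = (s + 1) mod m)"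

definition dsym :: "(nat \<Rightarrow> nat) \<Rightarrow> (nat \<Rightarrow> nat) \<Rightarrow> real" where
  "dsym x y = (if x = y then 0 else (1/2) ^ (LEAST n. x n \<noteq> y n))"

definition holder_on :: "(nat \<Rightarrow> nat) set \<Rightarrow> ((nat \<Rightarrow> nat) \<Rightarrow> real) \<Rightarrow> bool" where
  "holder_on X f \<longleftrightarrow> (\<exists>C \<alpha>. \<alpha> > 0 \<and> (\<forall>x\<in>X. \<forall>y\<in>X. \<bar>f x - f y\<bar> \<le> C * dsym x y powr \<alpha>))"

definition birkhoff :: "nat \<Rightarrow> ((nat \<Rightarrow> nat) \<Rightarrow> real) \<Rightarrow> (nat \<Rightarrow> nat) \<Rightarrow> real" where
  "birkhoff n \<phi> x = (\<Sum>i<n. \<phi> ((shift ^^ i) x))"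

definition pressure :: "nat set \<Rightarrow> (nat \<Rightarrow> nat \<Rightarrow> bool) \<Rightarrow> ((nat \<Rightarrow> nat) \<Rightarrow> real) \<Rightarrow> real" where
  "pressure S A \<phi> = lim (\<lambda>n. ln (\<Sum>w\<in>(\<lambda>x. map x [0..<n]) ` Sigma_sub S A.
       (SUP x\<in>{x \<in> Sigma_sub S A. map x [0..<n] = w}. exp (birkhoff n \<phi> x))) / real n)"

definition transfer :: "nat set \<Rightarrow> (nat \<Rightarrow> nat \<Rightarrow> bool) \<Rightarrow> ((nat \<Rightarrow> nat) \<Rightarrow> real)
    \<Rightarrow> ((nat \<Rightarrow> nat) \<Rightarrow> real) \<Rightarrow> (nat \<Rightarrow> nat) \<Rightarrow> real" where
  "transfer S A \<phi> \<psi> x = (\<Sum>y\<in>{y \<in> Sigma_sub S A. shift y = x}. exp (\<phi> y) * \<psi> y)"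

definition transfer_Delta :: "nat set \<Rightarrow> (nat \<Rightarrow> nat \<Rightarrow> bool) \<Rightarrow> nat set \<Rightarrow> ((nat \<Rightarrow> nat) \<Rightarrow> real)
    \<Rightarrow> ((nat \<Rightarrow> nat) \<Rightarrow> real) \<Rightarrow> (nat \<Rightarrow> nat) \<Rightarrow> real" where
  "transfer_Delta S A \<Delta> \<phi> \<psi> = transfer S A \<phi> (\<lambda>y. \<psi> y * (if y 0 \<in> \<Delta> then 1 else 0))"

definition transfer_m :: "nat set \<Rightarrow> (nat \<Rightarrow> nat \<Rightarrow> bool) \<Rightarrow> (nat \<Rightarrow> nat set) \<Rightarrow> nat \<Rightarrow> nat
    \<Rightarrow> ((nat \<Rightarrow> nat) \<Rightarrow> real) \<Rightarrow> ((nat \<Rightarrow> nat) \<Rightarrow> real) \<Rightarrow> (nat \<Rightarrow> nat) \<Rightarrow> real" where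
  "transfer_m S A D m j \<phi> \<psi> x =
     (\<Sum>y\<in>{y \<in> Sigma_sub S A. (shift ^^ m) y = x \<and> (\<forall>s<m. y s \<in> D ((j + s) mod m))}.
        exp (birkhoff m \<phi> y) * \<psi> y)"

definition Omega :: "nat set \<Rightarrow> (nat \<Rightarrow> nat \<Rightarrow> bool) \<Rightarrow> (nat \<Rightarrow> nat set) \<Rightarrow> nat \<Rightarrow> (nat \<Rightarrow> nat) set" where
  "Omega \<Delta> A D j = {x \<in> Sigma_sub \<Delta> A. x 0 \<in> D j}"

end

theory Submission
  imports Defs
begin


locale sft =
  fixes L m :: nat and A :: "nat \<Rightarrow> nat \<Rightarrow> bool" and \<phi> :: "(nat \<Rightarrow> nat) \<Rightarrow> real"
    and \<Delta> :: "nat set" and D :: "nat \<Rightarrow> nat set"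
  assumes m2: "m \<ge> 2"
    and holder: "holder_on (Sigma_sub {1..L} A) \<phi>"
    and normalised: "\<forall>x\<in>Sigma_sub {1..L} A. transfer {1..L} A \<phi> (\<lambda>_. 1) x = 1"
    and Dsub: "\<Delta> \<subseteq> {1..L}"
    and irrD: "irreducible_on \<Delta> A"
    and cyc: "cyclic_decomposition \<Delta> A D m"
begin

abbreviation "Sg \<equiv> Sigma_sub {1..L} A"

definition cons :: "nat \<Rightarrow> (nat \<Rightarrow> nat) \<Rightarrow> (nat \<Rightarrow> nat)" where
  "cons a x = case_nat a x"

lemma shift_cons[simp]: "shift (cons a x) = x"
  by (simp add: shift_def cons_def)

lemma cons0[simp]: "cons a x 0 = a" and consS[simp]: "cons a x (Suc n) = x n"
  by (auto simp: cons_def)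

lemma Sg_shift: "y \<in> Sg \<Longrightarrow> shift y \<in> Sg"
  by (auto simp: Sigma_sub_def shift_def)

lemma Sg_cons: "x \<in> Sg \<Longrightarrow> a \<in> {1..L} \<Longrightarrow> A a (x 0) \<Longrightarrow> cons a x \<in> Sg"
  unfolding Sigma_sub_def
proof (intro CollectI conjI allI)
  fix i assume x: "x \<in> {x. (\<forall>i. x i \<in> {1..L}) \<and> (\<forall>i. A (x i) (x (Suc i)))}" and a: "a \<in> {1..L}" "A a (x 0)"
  show "cons a x i \<in> {1..L}" using x a by (cases i) auto
  show "A (cons a x i) (cons a x (Suc i))" using x a by (cases i) auto
qed

lemma cons_shift: "cons (y 0) (shift y) = y"
proof
  fix n show "cons (y 0) (shift y) n = y n" by (cases n) (auto simp: shift_def)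
qed

lemma pre_eq: "x \<in> Sg \<Longrightarrow> {y \<in> Sg. shift y = x} = (\<lambda>a. cons a x) ` {a \<in> {1..L}. A a (x 0)}"
proof (intro equalityI subsetI)
  fix y assume x: "x \<in> Sg" and y: "y \<in> {y \<in> Sg. shift y = x}"
  then have "y = cons (y 0) x" using cons_shift[of y] by simp
  moreover have "y 0 \<in> {a \<in> {1..L}. A a (x 0)}"
    using y by (auto simp: Sigma_sub_def shift_def)
  ultimately show "y \<in> (\<lambda>a. cons a x) ` {a \<in> {1..L}. A a (x 0)}" by blast
next
  fix y assume x: "x \<in> Sg" and y: "y \<in> (\<lambda>a. cons a x) ` {a \<in> {1..L}. A a (x 0)}"
  then obtain a where "a \<in> {1..L}" "A a (x 0)" "y = cons a x" by blast
  then show "y \<in> {y \<in> Sg. shift y = x}" using Sg_cons x by simp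
qed

lemma pre_empty: "x \<notin> Sg \<Longrightarrow> {y \<in> Sg. shift y = x} = {}"
  using Sg_shift by auto

lemma inj_cons: "inj (\<lambda>a. cons a x)"
  by (rule injI) (metis cons0)

lemma finite_pre: "finite {y \<in> Sg. shift y = x}"
proof (cases "x \<in> Sg")
  case True then show ?thesis by (subst pre_eq) auto
next
  case False then show ?thesis by (subst pre_empty) auto
qed

lemma transfer_cons:
  "x \<in> Sg \<Longrightarrow> transfer {1..L} A \<phi> f x = (\<Sum>a\<in>{a \<in> {1..L}. A a (x 0)}. exp (\<phi> (cons a x)) * f (cons a x))"
  unfolding transfer_def pre_eq
  by (subst sum.reindex) (auto intro: inj_on_subset[OF inj_cons])

lemma transfer_out: "x \<notin> Sg \<Longrightarrow> transfer {1..L} A \<phi> f x = 0"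
  unfolding transfer_def pre_empty by simp

lemma funpow_shift: "(shift ^^ n) y t = y (t + n)"
  by (induction n arbitrary: t) (auto simp: shift_def)

lemma D_sub: "s < m \<Longrightarrow> D s \<subseteq> \<Delta>"
  using cyc unfolding cyclic_decomposition_def by auto

lemma Delta_D: "a \<in> \<Delta> \<Longrightarrow> \<exists>s<m. a \<in> D s"
  using cyc unfolding cyclic_decomposition_def by auto

lemma D_disj: "s < m \<Longrightarrow> s' < m \<Longrightarrow> a \<in> D s \<Longrightarrow> a \<in> D s' \<Longrightarrow> s = s'"
  using cyc unfolding cyclic_decomposition_def by blast

lemma D_step: "s < m \<Longrightarrow> s' < m \<Longrightarrow> a \<in> D s \<Longrightarrow> b \<in> D s' \<Longrightarrow> A a b \<Longrightarrow> s' = (s+1) mod m"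
  using cyc unfolding cyclic_decomposition_def by blast

lemma m_pos: "m > 0" using m2 by auto

lemma D_step_mod: "a \<in> D (t mod m) \<Longrightarrow> b \<in> D s' \<Longrightarrow> s' < m \<Longrightarrow> A a b \<Longrightarrow> s' = Suc t mod m"
  using D_step[of "t mod m" s' a b] m_pos by (simp add: mod_Suc_eq)

lemma finite_Delta: "finite \<Delta>" using Dsub finite_subset by blast


lemma exp_lip: "(a::real) \<le> B \<Longrightarrow> b \<le> B \<Longrightarrow> \<bar>exp a - exp b\<bar> \<le> exp B * \<bar>a - b\<bar>"
proof -
  have key: "exp y - exp x \<le> (y - x) * exp y" if "x \<le> y" for x y :: real
  proof -
    have "1 + (x - y) \<le> exp (x - y)" by (rule exp_ge_add_one_self)
    then have "exp y * (1 + (x - y)) \<le> exp y * exp (x - y)" by simp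
    also have "\<dots> = exp x" by (simp add: exp_diff)
    finally show ?thesis by (simp add: algebra_simps)
  qed
  assume ab: "a \<le> B" "b \<le> B"
  show ?thesis
  proof (cases "a \<le> b")
    case True
    then have "\<bar>exp a - exp b\<bar> = exp b - exp a" by simp
    also have "\<dots> \<le> (b - a) * exp b" using key[OF True] .
    also have "\<dots> \<le> (b - a) * exp B" using True ab by (intro mult_left_mono) auto
    finally show ?thesis using True by (simp add: algebra_simps)
  next
    case False
    then have "\<bar>exp a - exp b\<bar> = exp a - exp b" by simp
    also have "\<dots> \<le> (a - b) * exp a" using key False by simp
    also have "\<dots> \<le> (a - b) * exp B" using False ab by (intro mult_left_mono) auto
    finally show ?thesis using False by (simp add: algebra_simps)
  qed
qed

definition cc :: "((nat \<Rightarrow> nat) \<Rightarrow> real) \<Rightarrow> bool" where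
  "cc f \<longleftrightarrow> (\<forall>\<epsilon>>0. \<exists>N. \<forall>x\<in>Sg. \<forall>y\<in>Sg. (\<forall>t<N. x t = y t) \<longrightarrow> \<bar>f x - f y\<bar> \<le> \<epsilon>)"

definition bnd :: "((nat \<Rightarrow> nat) \<Rightarrow> real) \<Rightarrow> bool" where
  "bnd f \<longleftrightarrow> (\<exists>B. \<forall>x\<in>Sg. \<bar>f x\<bar> \<le> B)"

definition CB where "CB f \<longleftrightarrow> cc f \<and> bnd f"

lemma bndE: assumes "bnd f" obtains B where "0 \<le> B" "\<And>x. x \<in> Sg \<Longrightarrow> \<bar>f x\<bar> \<le> B"
proof -
  from assms obtain B where B: "\<forall>x\<in>Sg. \<bar>f x\<bar> \<le> B" unfolding bnd_def by blast
  show ?thesis by (rule that[of "max B 0"]) (use B in auto)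
qed


lemma CB_const: "CB (\<lambda>_. c)"
  unfolding CB_def cc_def bnd_def by auto

lemma CB_lin: assumes "CB f" "CB g" shows "CB (\<lambda>y. a * f y + b * g y)"
proof -
  from assms obtain Bf Bg where Bf: "\<forall>x\<in>Sg. \<bar>f x\<bar> \<le> Bf" and Bg: "\<forall>x\<in>Sg. \<bar>g x\<bar> \<le> Bg"
    unfolding CB_def bnd_def by blast
  have "bnd (\<lambda>y. a * f y + b * g y)"
    unfolding bnd_def
  proof (intro exI ballI)
    fix x assume x: "x \<in> Sg"
    have "\<bar>a * f x + b * g x\<bar> \<le> \<bar>a\<bar> * \<bar>f x\<bar> + \<bar>b\<bar> * \<bar>g x\<bar>" by (simp add: abs_mult abs_triangle_ineq[THEN order_trans])
    also have "\<dots> \<le> \<bar>a\<bar> * Bf + \<bar>b\<bar> * Bg" using Bf Bg x by (intro add_mono mult_left_mono) auto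
    finally show "\<bar>a * f x + b * g x\<bar> \<le> \<bar>a\<bar> * Bf + \<bar>b\<bar> * Bg" .
  qed
  moreover have "cc (\<lambda>y. a * f y + b * g y)"
    unfolding cc_def
  proof (intro allI impI)
    fix e :: real assume e: "e > 0"
    define d where "d = e / (\<bar>a\<bar> + \<bar>b\<bar> + 1)"
    have d: "d > 0" using e by (simp add: d_def add_pos_nonneg)
    obtain N1 where N1: "\<forall>x\<in>Sg. \<forall>y\<in>Sg. (\<forall>t<N1. x t = y t) \<longrightarrow> \<bar>f x - f y\<bar> \<le> d"
      using assms(1) d unfolding CB_def cc_def by blast
    obtain N2 where N2: "\<forall>x\<in>Sg. \<forall>y\<in>Sg. (\<forall>t<N2. x t = y t) \<longrightarrow> \<bar>g x - g y\<bar> \<le> d"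
      using assms(2) d unfolding CB_def cc_def by blast
    show "\<exists>N. \<forall>x\<in>Sg. \<forall>y\<in>Sg. (\<forall>t<N. x t = y t) \<longrightarrow> \<bar>a * f x + b * g x - (a * f y + b * g y)\<bar> \<le> e"
    proof (intro exI[of _ "max N1 N2"] ballI impI)
      fix x y assume xy: "x \<in> Sg" "y \<in> Sg" "\<forall>t<max N1 N2. x t = y t"
      have eq: "a * f x + b * g x - (a * f y + b * g y) = a * (f x - f y) + b * (g x - g y)" by (simp add: algebra_simps)
      have "\<bar>a * f x + b * g x - (a * f y + b * g y)\<bar> \<le> \<bar>a\<bar> * \<bar>f x - f y\<bar> + \<bar>b\<bar> * \<bar>g x - g y\<bar>"
        unfolding eq abs_mult[symmetric] by (rule abs_triangle_ineq)
      also have "\<dots> \<le> \<bar>a\<bar> * d + \<bar>b\<bar> * d"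
        using N1 N2 xy by (intro add_mono mult_left_mono) auto
      also have "\<dots> = (\<bar>a\<bar> + \<bar>b\<bar>) * d" by (simp add: algebra_simps)
      also have "\<dots> = e * ((\<bar>a\<bar> + \<bar>b\<bar>) / (\<bar>a\<bar> + \<bar>b\<bar> + 1))"
        unfolding d_def by simp
      also have "\<dots> \<le> e * 1" using e by (intro mult_left_mono) auto
      finally show "\<bar>a * f x + b * g x - (a * f y + b * g y)\<bar> \<le> e" by simp
    qed
  qed
  ultimately show ?thesis unfolding CB_def by blast
qed

lemma CB_mult: assumes "CB f" "CB g" shows "CB (\<lambda>y. f y * g y)"
proof -
  from assms have "bnd f" "bnd g" unfolding CB_def by auto
  then obtain Bf Bg where Bf0: "Bf \<ge> 0" and Bf: "\<And>x. x\<in>Sg \<Longrightarrow> \<bar>f x\<bar> \<le> Bf"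
    and Bg0: "Bg \<ge> 0" and Bg: "\<And>x. x\<in>Sg \<Longrightarrow> \<bar>g x\<bar> \<le> Bg"
    by (metis bndE)
  have "bnd (\<lambda>y. f y * g y)"
    unfolding bnd_def
  proof (intro exI[of _ "Bf * Bg"] ballI)
    fix x assume x: "x \<in> Sg"
    have "\<bar>f x * g x\<bar> = \<bar>f x\<bar> * \<bar>g x\<bar>" by (rule abs_mult)
    also have "\<dots> \<le> Bf * Bg" using Bf[OF x] Bg[OF x] Bf0 by (intro mult_mono) auto
    finally show "\<bar>f x * g x\<bar> \<le> Bf * Bg" .
  qed
  moreover have "cc (\<lambda>y. f y * g y)"
    unfolding cc_def
  proof (intro allI impI)
    fix e :: real assume e: "e > 0"
    define d where "d = e / (Bf + Bg + 1)"
    have d: "d > 0" using e Bf0 Bg0 by (simp add: d_def)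
    obtain N1 where N1: "\<forall>x\<in>Sg. \<forall>y\<in>Sg. (\<forall>t<N1. x t = y t) \<longrightarrow> \<bar>f x - f y\<bar> \<le> d"
      using assms(1) d unfolding CB_def cc_def by blast
    obtain N2 where N2: "\<forall>x\<in>Sg. \<forall>y\<in>Sg. (\<forall>t<N2. x t = y t) \<longrightarrow> \<bar>g x - g y\<bar> \<le> d"
      using assms(2) d unfolding CB_def cc_def by blast
    show "\<exists>N. \<forall>x\<in>Sg. \<forall>y\<in>Sg. (\<forall>t<N. x t = y t) \<longrightarrow> \<bar>f x * g x - f y * g y\<bar> \<le> e"
    proof (intro exI[of _ "max N1 N2"] ballI impI)
      fix x y assume xy: "x \<in> Sg" "y \<in> Sg" "\<forall>t<max N1 N2. x t = y t"
      have "f x * g x - f y * g y = f x * (g x - g y) + g y * (f x - f y)" by (simp add: algebra_simps)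
      then have "\<bar>f x * g x - f y * g y\<bar> \<le> \<bar>f x\<bar> * \<bar>g x - g y\<bar> + \<bar>g y\<bar> * \<bar>f x - f y\<bar>"
        by (simp add: abs_mult[symmetric] abs_triangle_ineq)
      also have "\<dots> \<le> Bf * d + Bg * d"
        using N1 N2 xy Bf Bg Bf0 Bg0 by (intro add_mono mult_mono) auto
      also have "\<dots> = (Bf + Bg) * d" by (simp add: algebra_simps)
      also have "\<dots> = e * ((Bf + Bg) / (Bf + Bg + 1))"
        unfolding d_def by simp
      also have "\<dots> \<le> e * 1" using e Bf0 Bg0 by (intro mult_left_mono) auto
      finally show "\<bar>f x * g x - f y * g y\<bar> \<le> e" by simp
    qed
  qed
  ultimately show ?thesis unfolding CB_def by blast
qed

lemma CB_exp: assumes "CB f" shows "CB (\<lambda>y. exp (f y))"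
proof -
  from assms have "bnd f" unfolding CB_def by auto
  then obtain B where B0: "B \<ge> 0" and B: "\<And>x. x\<in>Sg \<Longrightarrow> \<bar>f x\<bar> \<le> B"
    by (metis bndE)
  have "bnd (\<lambda>y. exp (f y))"
    unfolding bnd_def
  proof (intro exI[of _ "exp B"] ballI)
    fix x assume "x \<in> Sg"
    then have "f x \<le> B" using B[of x] by (simp add: abs_le_iff)
    then show "\<bar>exp (f x)\<bar> \<le> exp B" by simp
  qed
  moreover have "cc (\<lambda>y. exp (f y))"
    unfolding cc_def
  proof (intro allI impI)
    fix e :: real assume e: "e > 0"
    define d where "d = e / exp B"
    have d: "d > 0" using e by (simp add: d_def)
    obtain N1 where N1: "\<forall>x\<in>Sg. \<forall>y\<in>Sg. (\<forall>t<N1. x t = y t) \<longrightarrow> \<bar>f x - f y\<bar> \<le> d"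
      using assms(1) d unfolding CB_def cc_def by blast
    show "\<exists>N. \<forall>x\<in>Sg. \<forall>y\<in>Sg. (\<forall>t<N. x t = y t) \<longrightarrow> \<bar>exp (f x) - exp (f y)\<bar> \<le> e"
    proof (intro exI[of _ N1] ballI impI)
      fix x y assume xy: "x \<in> Sg" "y \<in> Sg" "\<forall>t<N1. x t = y t"
      have "\<bar>exp (f x) - exp (f y)\<bar> \<le> exp B * \<bar>f x - f y\<bar>"
        using B xy by (intro exp_lip) (auto simp: abs_le_iff)
      also have "\<dots> \<le> exp B * d" using N1 xy by (intro mult_left_mono) auto
      also have "\<dots> = e" by (simp add: d_def)
      finally show "\<bar>exp (f x) - exp (f y)\<bar> \<le> e" .
    qed
  qed
  ultimately show ?thesis unfolding CB_def by blast
qed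

definition ind :: "nat set \<Rightarrow> (nat \<Rightarrow> nat) \<Rightarrow> real" where
  "ind E y = (if y 0 \<in> E then 1 else 0)"

lemma CB_ind: "CB (ind E)"
  unfolding CB_def cc_def bnd_def ind_def
  by (auto intro!: exI[of _ 1] exI[of _ "Suc 0"])

lemma dsym_le: assumes "\<forall>t<N. x t = y t" shows "dsym x y \<le> (1/2)^N"
proof (cases "x = y")
  case True then show ?thesis by (simp add: dsym_def)
next
  case False
  then obtain n where "x n \<noteq> y n" by auto
  then have "x (LEAST n. x n \<noteq> y n) \<noteq> y (LEAST n. x n \<noteq> y n)" by (rule LeastI)
  then have "N \<le> (LEAST n. x n \<noteq> y n)" using assms by (meson not_le)
  then show ?thesis using False by (simp add: dsym_def power_decreasing)
qed

lemma dsym_nonneg: "dsym x y \<ge> 0" by (simp add: dsym_def)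

lemma phi_CB: "CB \<phi>"
proof -
  obtain C \<alpha> where a: "\<alpha> > 0" and H: "\<forall>x\<in>Sg. \<forall>y\<in>Sg. \<bar>\<phi> x - \<phi> y\<bar> \<le> C * dsym x y powr \<alpha>"
    using holder unfolding holder_on_def by blast
  define C' where "C' = max C 0"
  have H': "\<bar>\<phi> x - \<phi> y\<bar> \<le> C' * ((1/2)^N) powr \<alpha>" if "x \<in> Sg" "y \<in> Sg" "\<forall>t<N. x t = y t" for x y N
  proof -
    have "\<bar>\<phi> x - \<phi> y\<bar> \<le> C * dsym x y powr \<alpha>" using H that by blast
    also have "\<dots> \<le> C' * dsym x y powr \<alpha>" unfolding C'_def by (intro mult_right_mono) auto
    also have "\<dots> \<le> C' * ((1/2)^N) powr \<alpha>"
      unfolding C'_def using dsym_le[OF that(3)] a dsym_nonneg by (intro mult_left_mono powr_mono2) auto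
    finally show ?thesis .
  qed
  have pw: "((1/2::real)^N) powr \<alpha> = ((1/2) powr \<alpha>)^N" for N
    by (simp add: powr_power powr_realpow[symmetric] powr_powr mult.commute)
  have r: "(1/2::real) powr \<alpha> < 1" using powr_less_mono2[OF a, of "1/2" 1] by simp
  have lim: "(\<lambda>N. C' * ((1/2::real) powr \<alpha>)^N) \<longlonglongrightarrow> C' * 0"
    by (intro tendsto_mult tendsto_const LIMSEQ_power_zero) (use r in auto)
  have "cc \<phi>"
    unfolding cc_def
  proof (intro allI impI)
    fix e :: real assume e: "e > 0"
    from lim e obtain N where "\<bar>C' * ((1/2::real) powr \<alpha>)^N\<bar> < e"
      by (auto simp: LIMSEQ_def dist_real_def)
    then have N: "C' * ((1/2::real)^N) powr \<alpha> \<le> e" unfolding pw by simp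
    show "\<exists>N. \<forall>x\<in>Sg. \<forall>y\<in>Sg. (\<forall>t<N. x t = y t) \<longrightarrow> \<bar>\<phi> x - \<phi> y\<bar> \<le> e"
      using H' N by (meson order_trans)
  qed
  moreover have "bnd \<phi>"
  proof (cases "Sg = {}")
    case True then show ?thesis by (simp add: bnd_def)
  next
    case False
    then obtain x0 where x0: "x0 \<in> Sg" by auto
    show ?thesis unfolding bnd_def
    proof (intro exI[of _ "\<bar>\<phi> x0\<bar> + C' * ((1/2)^0) powr \<alpha>"] ballI)
      fix x assume "x \<in> Sg"
      then have "\<bar>\<phi> x - \<phi> x0\<bar> \<le> C' * ((1/2)^0) powr \<alpha>" using H' x0 by blast
      then show "\<bar>\<phi> x\<bar> \<le> \<bar>\<phi> x0\<bar> + C' * ((1/2)^0) powr \<alpha>" by linarith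
    qed
  qed
  ultimately show ?thesis unfolding CB_def by blast
qed

end


context sft begin

definition op :: "nat set \<Rightarrow> ((nat \<Rightarrow> nat) \<Rightarrow> real) \<Rightarrow> (nat \<Rightarrow> nat) \<Rightarrow> real" where
  "op E f = transfer {1..L} A \<phi> (\<lambda>y. f y * ind E y)"

lemma transfer_Delta_op: "transfer_Delta {1..L} A \<Delta> \<phi> = op \<Delta>"
  by (auto simp: transfer_Delta_def op_def ind_def fun_eq_iff)

lemma op_cons: "x \<in> Sg \<Longrightarrow> op E f x = (\<Sum>a\<in>{a \<in> {1..L}. A a (x 0)}. exp (\<phi> (cons a x)) * (f (cons a x) * ind E (cons a x)))"
  unfolding op_def by (rule transfer_cons)

lemma op_out: "x \<notin> Sg \<Longrightarrow> op E f x = 0"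
  unfolding op_def by (rule transfer_out)

lemma norm1: "x \<in> Sg \<Longrightarrow> (\<Sum>a\<in>{a \<in> {1..L}. A a (x 0)}. exp (\<phi> (cons a x))) = 1"
  using normalised transfer_cons[of x "\<lambda>_. 1"] by simp

definition good :: "(((nat \<Rightarrow> nat) \<Rightarrow> real) \<Rightarrow> ((nat \<Rightarrow> nat) \<Rightarrow> real)) \<Rightarrow> bool" where
  "good T \<longleftrightarrow>
    (\<forall>f g a b. \<forall>x\<in>Sg. T (\<lambda>y. a * f y + b * g y) x = a * T f x + b * T g x) \<and>
    (\<forall>f g. (\<forall>y\<in>Sg. f y = g y) \<longrightarrow> (\<forall>x\<in>Sg. T f x = T g x)) \<and>
    (\<forall>f B. 0 \<le> B \<longrightarrow> (\<forall>y\<in>Sg. \<bar>f y\<bar> \<le> B) \<longrightarrow> (\<forall>x\<in>Sg. \<bar>T f x\<bar> \<le> B)) \<and>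
    (\<forall>f. (\<forall>y\<in>Sg. 0 \<le> f y) \<longrightarrow> (\<forall>x\<in>Sg. 0 \<le> T f x)) \<and>
    (\<forall>f. CB f \<longrightarrow> CB (T f))"

lemma goodD:
  assumes "good T"
  shows "x \<in> Sg \<Longrightarrow> T (\<lambda>y. a * f y + b * g y) x = a * T f x + b * T g x"
    and "(\<And>y. y \<in> Sg \<Longrightarrow> f y = g y) \<Longrightarrow> x \<in> Sg \<Longrightarrow> T f x = T g x"
    and "0 \<le> B \<Longrightarrow> (\<And>y. y\<in>Sg \<Longrightarrow> \<bar>f y\<bar> \<le> B) \<Longrightarrow> x \<in> Sg \<Longrightarrow> \<bar>T f x\<bar> \<le> B"
    and "(\<And>y. y\<in>Sg \<Longrightarrow> 0 \<le> f y) \<Longrightarrow> x \<in> Sg \<Longrightarrow> 0 \<le> T f x"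
    and "CB f \<Longrightarrow> CB (T f)"
  using assms unfolding good_def by blast+

lemma good_id: "good (\<lambda>f. f)"
  unfolding good_def by auto

lemma good_comp: assumes T: "good T" and U: "good U" shows "good (\<lambda>f. T (U f))"
  unfolding good_def
proof (intro conjI allI impI ballI)
  fix f g a b x assume x: "x \<in> Sg"
  have "T (U (\<lambda>y. a * f y + b * g y)) x = T (\<lambda>y. a * U f y + b * U g y) x"
    using goodD(1)[OF U] x by (intro goodD(2)[OF T]) auto
  also have "\<dots> = a * T (U f) x + b * T (U g) x" using goodD(1)[OF T] x by auto
  finally show "T (U (\<lambda>y. a * f y + b * g y)) x = a * T (U f) x + b * T (U g) x" .
next
  fix f g :: "(nat \<Rightarrow> nat) \<Rightarrow> real" and x assume "\<forall>y\<in>Sg. f y = g y" "x \<in> Sg"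
  then show "T (U f) x = T (U g) x" using goodD(2)[OF U, of f g] by (intro goodD(2)[OF T]) auto
next
  fix f :: "(nat \<Rightarrow> nat) \<Rightarrow> real" and B :: real and x assume B: "0 \<le> B" "\<forall>y\<in>Sg. \<bar>f y\<bar> \<le> B" and x: "x \<in> Sg"
  show "\<bar>T (U f) x\<bar> \<le> B"
    using goodD(3)[OF U B(1), of f] B(2) by (intro goodD(3)[OF T B(1)] x) auto
next
  fix f :: "(nat \<Rightarrow> nat) \<Rightarrow> real" and x assume "\<forall>y\<in>Sg. 0 \<le> f y" "x \<in> Sg"
  then show "0 \<le> T (U f) x"
    using goodD(4)[OF U, of f] by (intro goodD(4)[OF T]) auto
next
  fix f assume "CB f" then show "CB (T (U f))" using goodD(5)[OF T] goodD(5)[OF U] by blast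
qed

lemma op_lin: "op E (\<lambda>y. a * f y + b * g y) = (\<lambda>x. a * op E f x + b * op E g x)"
proof
  fix x
  show "op E (\<lambda>y. a * f y + b * g y) x = a * op E f x + b * op E g x"
    unfolding op_def transfer_def sum_distrib_left sum.distrib[symmetric]
    by (rule sum.cong) (auto simp: algebra_simps)
qed

lemma op_cong: "(\<And>y. y \<in> Sg \<Longrightarrow> f y = g y) \<Longrightarrow> op E f = op E g"
  unfolding op_def transfer_def
  by (auto simp: fun_eq_iff intro!: sum.cong)

lemma op_bound: assumes "0 \<le> B" "\<And>y. y\<in>Sg \<Longrightarrow> \<bar>f y\<bar> \<le> B" shows "\<bar>op E f x\<bar> \<le> B"
proof (cases "x \<in> Sg")
  case False then show ?thesis using assms by (simp add: op_out)
next
  case True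
  have "\<bar>op E f x\<bar> \<le> (\<Sum>a\<in>{a \<in> {1..L}. A a (x 0)}. \<bar>exp (\<phi> (cons a x)) * (f (cons a x) * ind E (cons a x))\<bar>)"
    unfolding op_cons[OF True] by (rule sum_abs)
  also have "\<dots> \<le> (\<Sum>a\<in>{a \<in> {1..L}. A a (x 0)}. exp (\<phi> (cons a x)) * B)"
  proof (rule sum_mono)
    fix a assume a: "a \<in> {a \<in> {1..L}. A a (x 0)}"
    then have c: "cons a x \<in> Sg" using Sg_cons True by auto
    have "\<bar>f (cons a x) * ind E (cons a x)\<bar> \<le> B"
      using assms(2)[OF c] assms(1) by (auto simp: ind_def abs_mult)
    then show "\<bar>exp (\<phi> (cons a x)) * (f (cons a x) * ind E (cons a x))\<bar> \<le> exp (\<phi> (cons a x)) * B"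
      by (simp add: abs_mult)
  qed
  also have "\<dots> = B" using norm1[OF True] by (simp add: sum_distrib_right[symmetric])
  finally show ?thesis .
qed

lemma op_nonneg: assumes "\<And>y. y\<in>Sg \<Longrightarrow> 0 \<le> f y" shows "0 \<le> op E f x"
proof (cases "x \<in> Sg")
  case False then show ?thesis by (simp add: op_out)
next
  case True
  show ?thesis unfolding op_cons[OF True]
    using assms Sg_cons True by (intro sum_nonneg) (auto simp: ind_def)
qed

lemma op_CB: assumes f: "CB f" shows "CB (op E f)"
proof -
  define G where "G = (\<lambda>y. exp (\<phi> y) * (f y * ind E y))"
  have G: "CB G" unfolding G_def by (intro CB_mult CB_exp phi_CB f CB_ind)
  from f have "bnd f" unfolding CB_def by auto
  then obtain B where B0: "0 \<le> B" and B: "\<And>y. y \<in> Sg \<Longrightarrow> \<bar>f y\<bar> \<le> B"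
    by (metis bndE)
  have "bnd (op E f)"
    unfolding bnd_def using op_bound[of B f E] B0 B by blast
  moreover have "cc (op E f)"
    unfolding cc_def
  proof (intro allI impI)
    fix e :: real assume e: "e > 0"
    define d where "d = e / (real L + 1)"
    have d: "d > 0" using e by (simp add: d_def)
    obtain N where N: "\<forall>x\<in>Sg. \<forall>y\<in>Sg. (\<forall>t<N. x t = y t) \<longrightarrow> \<bar>G x - G y\<bar> \<le> d"
      using G d unfolding CB_def cc_def by blast
    show "\<exists>N. \<forall>x\<in>Sg. \<forall>y\<in>Sg. (\<forall>t<N. x t = y t) \<longrightarrow> \<bar>op E f x - op E f y\<bar> \<le> e"
    proof (intro exI[of _ "Suc N"] ballI impI)
      fix x y assume x: "x \<in> Sg" and y: "y \<in> Sg" and xy: "\<forall>t<Suc N. x t = y t"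
      then have x0: "x 0 = y 0" by auto
      let ?I = "{a \<in> {1..L}. A a (x 0)}"
      have "op E f x - op E f y = (\<Sum>a\<in>?I. G (cons a x) - G (cons a y))"
        unfolding op_cons[OF x] op_cons[OF y] x0 G_def by (simp add: sum_subtractf)
      then have "\<bar>op E f x - op E f y\<bar> \<le> (\<Sum>a\<in>?I. \<bar>G (cons a x) - G (cons a y)\<bar>)"
        by (simp add: sum_abs)
      also have "\<dots> \<le> (\<Sum>a\<in>?I. d)"
      proof (rule sum_mono)
        fix a assume a: "a \<in> ?I"
        have "cons a x \<in> Sg" using Sg_cons x a by auto
        moreover have "cons a y \<in> Sg" using Sg_cons y a x0 by auto
        moreover have "\<forall>t<N. cons a x t = cons a y t"
          using xy by (auto simp: cons_def split: nat.splits)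
        ultimately show "\<bar>G (cons a x) - G (cons a y)\<bar> \<le> d" using N by blast
      qed
      also have "\<dots> = real (card ?I) * d" by simp
      also have "\<dots> \<le> real L * d"
      proof -
        have "card ?I \<le> card {1..L}" by (intro card_mono) auto
        then show ?thesis using d by (intro mult_right_mono) auto
      qed
      also have "\<dots> = e * (real L / (real L + 1))" by (simp add: d_def)
      also have "\<dots> \<le> e * 1" using e by (intro mult_left_mono) auto
      finally show "\<bar>op E f x - op E f y\<bar> \<le> e" by simp
    qed
  qed
  ultimately show ?thesis unfolding CB_def by blast
qed

lemma good_op: "good (op E)"
  unfolding good_def
proof (intro conjI allI impI ballI)
  fix f g :: "(nat \<Rightarrow> nat) \<Rightarrow> real" and x assume "\<forall>y\<in>Sg. f y = g y"
  then show "op E f x = op E g x" using op_cong[of f g E] by auto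
next
  fix f and B :: real and x assume B: "0 \<le> B" "\<forall>y\<in>Sg. \<bar>f y\<bar> \<le> B"
  then show "\<bar>op E f x\<bar> \<le> B" using op_bound[of B f] by blast
next
  fix f :: "(nat \<Rightarrow> nat) \<Rightarrow> real" and x assume "\<forall>y\<in>Sg. 0 \<le> f y"
  then show "0 \<le> op E f x" using op_nonneg[of f] by blast
next
  fix f g a b x show "op E (\<lambda>y. a * f y + b * g y) x = a * op E f x + b * op E g x"
    by (simp add: op_lin)
next
  fix f assume "CB f" then show "CB (op E f)" by (rule op_CB)
qed

end


context sft begin

definition M :: "nat \<Rightarrow> ((nat \<Rightarrow> nat) \<Rightarrow> real) \<Rightarrow> (nat \<Rightarrow> nat) \<Rightarrow> real" where
  "M t = op (D (t mod m))"

primrec Pw :: "nat \<Rightarrow> nat \<Rightarrow> ((nat \<Rightarrow> nat) \<Rightarrow> real) \<Rightarrow> (nat \<Rightarrow> nat) \<Rightarrow> real" where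
  "Pw j 0 f = f"
| "Pw j (Suc l) f = Pw (Suc j) l (M j f)"

lemma good_M: "good (M t)"
  unfolding M_def by (rule good_op)

lemma good_Pw: "good (Pw j l)"
proof (induction l arbitrary: j)
  case 0
  have "Pw j 0 = (\<lambda>f. f)" by (simp add: fun_eq_iff)
  then show ?case using good_id by simp
next
  case (Suc l)
  have "Pw j (Suc l) = (\<lambda>f. Pw (Suc j) l (M j f))" by (simp add: fun_eq_iff)
  then show ?case using good_comp[OF Suc.IH good_M] by simp
qed

lemma Pw_add: "Pw j (a + b) f = Pw (j + a) b (Pw j a f)"
proof (induction a arbitrary: j f)
  case 0 then show ?case by simp
next
  case (Suc a)
  have "Pw j (Suc a + b) f = Pw (Suc j) (a + b) (M j f)" by simp
  also have "\<dots> = Pw (Suc j + a) b (Pw (Suc j) a (M j f))" by (rule Suc.IH)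
  finally show ?case by simp
qed

lemma Pw_Suc_right: "Pw j (Suc l) f = M (j + l) (Pw j l f)"
  using Pw_add[of j l 1 f] by simp

lemma M_mod: "j mod m = j' mod m \<Longrightarrow> M j = M j'"
  unfolding M_def by (simp only:)

lemma Pw_mod: "j mod m = j' mod m \<Longrightarrow> Pw j l = Pw j' l"
proof (induction l arbitrary: j j')
  case 0 then show ?case by (simp add: fun_eq_iff)
next
  case (Suc l)
  have "Suc j mod m = Suc j' mod m" using Suc.prems mod_Suc_eq[of j m] mod_Suc_eq[of j' m] by simp
  then have "Pw (Suc j) l = Pw (Suc j') l" by (rule Suc.IH)
  moreover have "M j = M j'" by (rule M_mod[OF Suc.prems])
  ultimately show ?case by (simp only: Pw.simps)
qed

lemma M_vanish:
  assumes "y 0 \<in> D s'" "s' < m" "s' \<noteq> Suc t mod m"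
  shows "M t F y = 0"
proof (cases "y \<in> Sg")
  case False then show ?thesis by (simp add: M_def op_out)
next
  case True
  show ?thesis unfolding M_def op_cons[OF True]
  proof (rule sum.neutral, rule ballI)
    fix a assume a: "a \<in> {a \<in> {1..L}. A a (y 0)}"
    have "a \<notin> D (t mod m)"
      using D_step_mod[of a t "y 0" s'] a assms by auto
    then show "exp (\<phi> (cons a y)) * (F (cons a y) * ind (D (t mod m)) (cons a y)) = 0"
      by (simp add: ind_def)
  qed
qed

lemma Delta_M: "op \<Delta> (M t F) x = M (Suc t) (M t F) x"
proof (cases "x \<in> Sg")
  case False then show ?thesis by (simp add: M_def op_out)
next
  case True
  show ?thesis unfolding M_def[of "Suc t"] op_cons[OF True]
  proof (rule sum.cong[OF refl])
    fix a assume a: "a \<in> {a \<in> {1..L}. A a (x 0)}"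
    have "ind \<Delta> (cons a x) * M t F (cons a x) = ind (D (Suc t mod m)) (cons a x) * M t F (cons a x)"
    proof (cases "a \<in> D (Suc t mod m)")
      case True
      then have "a \<in> \<Delta>" using D_sub[of "Suc t mod m"] m_pos by auto
      then show ?thesis using True by (simp add: ind_def)
    next
      case False
      show ?thesis
      proof (cases "a \<in> \<Delta>")
        case False then show ?thesis using \<open>a \<notin> D (Suc t mod m)\<close> by (simp add: ind_def)
      next
        case True
        then obtain s' where s': "s' < m" "a \<in> D s'" using Delta_D by blast
        then have "s' \<noteq> Suc t mod m" using \<open>a \<notin> D (Suc t mod m)\<close> by auto
        then have "M t F (cons a x) = 0" using M_vanish s' by simp
        then show ?thesis by simp
      qed
    qed
    then show "exp (\<phi> (cons a x)) * (M t F (cons a x) * ind \<Delta> (cons a x)) =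
          exp (\<phi> (cons a x)) * (M t F (cons a x) * ind (D (Suc t mod m)) (cons a x))"
      by (simp add: mult.commute)
  qed
qed

lemma Delta_Pw: "op \<Delta> (Pw j (Suc l) f) = Pw j (Suc (Suc l)) f"
proof
  fix x
  have "op \<Delta> (Pw j (Suc l) f) x = op \<Delta> (M (j + l) (Pw j l f)) x" by (simp only: Pw_Suc_right)
  also have "\<dots> = M (Suc (j + l)) (M (j + l) (Pw j l f)) x" by (rule Delta_M)
  also have "\<dots> = Pw j (Suc (Suc l)) f x"
    by (simp only: Pw_Suc_right[of j "Suc l"] Pw_Suc_right[of j l]) simp
  finally show "op \<Delta> (Pw j (Suc l) f) x = Pw j (Suc (Suc l)) f x" .
qed

lemma Delta_pow_Pw: "(op \<Delta> ^^ k) (Pw j (Suc l) f) = Pw j (Suc l + k) f"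
proof (induction k)
  case 0 then show ?case by simp
next
  case (Suc k)
  have "(op \<Delta> ^^ Suc k) (Pw j (Suc l) f) = op \<Delta> (Pw j (Suc (l + k)) f)" using Suc by simp
  also have "\<dots> = Pw j (Suc (Suc (l + k))) f" by (rule Delta_Pw)
  finally show ?case by simp
qed

lemma Pw_block: "Pw j (Suc n * m) f = Pw j m (Pw j (n * m) f)"
proof -
  have "Pw j (Suc n * m) f = Pw j (n * m + m) f" by (simp add: add.commute)
  also have "\<dots> = Pw (j + n * m) m (Pw j (n * m) f)" by (rule Pw_add)
  also have "Pw (j + n * m) m = Pw j m" by (rule Pw_mod) simp
  finally show ?thesis .
qed

end


context sft begin

definition Y :: "nat \<Rightarrow> nat \<Rightarrow> (nat \<Rightarrow> nat) \<Rightarrow> (nat \<Rightarrow> nat) set" where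
  "Y j l x = {y \<in> Sg. (shift ^^ l) y = x \<and> (\<forall>s<l. y s \<in> D ((j + s) mod m))}"

definition Qgen :: "nat \<Rightarrow> nat \<Rightarrow> ((nat \<Rightarrow> nat) \<Rightarrow> real) \<Rightarrow> (nat \<Rightarrow> nat) \<Rightarrow> real" where
  "Qgen j l f x = (\<Sum>y\<in>Y j l x. exp (birkhoff l \<phi> y) * f y)"

lemma transfer_m_Qgen: "transfer_m {1..L} A D m j \<phi> \<psi> x = Qgen j m \<psi> x"
  unfolding transfer_m_def Qgen_def Y_def by simp

lemma shift_iter_Suc: "(shift ^^ Suc l) y = (shift ^^ l) (shift y)"
  by (simp only: funpow_Suc_right comp_def)

lemma finite_iter_pre: "finite {y \<in> Sg. (shift ^^ l) y = x}"
proof (induction l arbitrary: x)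
  case 0 then show ?case by simp
next
  case (Suc l)
  have "{y \<in> Sg. (shift ^^ Suc l) y = x} \<subseteq> (\<Union>z\<in>{z \<in> Sg. (shift ^^ l) z = x}. {y \<in> Sg. shift y = z})"
    using Sg_shift by (auto simp: shift_iter_Suc simp del: funpow.simps)
  moreover have "finite (\<Union>z\<in>{z \<in> Sg. (shift ^^ l) z = x}. {y \<in> Sg. shift y = z})"
    using Suc.IH finite_pre by blast
  ultimately show ?case by (rule finite_subset)
qed

lemma finite_Y: "finite (Y j l x)"
  unfolding Y_def by (rule finite_subset[OF _ finite_iter_pre[of l x]]) auto

lemma birkhoff_Suc: "birkhoff (Suc l) \<phi> y = \<phi> y + birkhoff l \<phi> (shift y)"
  unfolding birkhoff_def sum.lessThan_Suc_shift by (simp only: shift_iter_Suc funpow_0)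

lemma Y_Suc: "Y j (Suc l) x = {y \<in> {y \<in> Sg. shift y \<in> Y (Suc j) l x}. y 0 \<in> D (j mod m)}"
proof -
  have "(\<forall>s<Suc l. y s \<in> D ((j + s) mod m)) \<longleftrightarrow> y 0 \<in> D (j mod m) \<and> (\<forall>s<l. y (Suc s) \<in> D ((Suc j + s) mod m))" for y
    by (simp add: All_less_Suc2)
  then show ?thesis
    unfolding Y_def using Sg_shift
    by (auto simp: shift_iter_Suc simp del: funpow.simps) (auto simp: shift_def)
qed

lemma Qgen_step: "Qgen j (Suc l) f x = Qgen (Suc j) l (M j f) x"
proof -
  let ?T = "Y (Suc j) l x"
  let ?W = "{y \<in> Sg. shift y \<in> ?T}"
  define h where "h y = exp (birkhoff l \<phi> (shift y)) * (if y 0 \<in> D (j mod m) then exp (\<phi> y) * f y else 0)" for y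
  have finT: "finite ?T" by (rule finite_Y)
  have finW: "finite ?W"
    by (rule finite_subset[of _ "\<Union>z\<in>?T. {y \<in> Sg. shift y = z}"]) (use finT finite_pre in auto)
  have "Qgen (Suc j) l (M j f) x = (\<Sum>z\<in>?T. \<Sum>y\<in>{y \<in> ?W. shift y = z}. h y)"
    unfolding Qgen_def
  proof (rule sum.cong[OF refl])
    fix z assume z: "z \<in> ?T"
    have "{y \<in> ?W. shift y = z} = {y \<in> Sg. shift y = z}" using z by auto
    then show "exp (birkhoff l \<phi> z) * M j f z = (\<Sum>y\<in>{y \<in> ?W. shift y = z}. h y)"
      unfolding M_def op_def transfer_def h_def
      by (auto simp: sum_distrib_left ind_def intro!: sum.cong)
  qed
  also have "\<dots> = (\<Sum>y\<in>?W. h y)"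
    by (rule sum.group[OF finW finT]) auto
  also have "\<dots> = (\<Sum>y\<in>{y \<in> ?W. y 0 \<in> D (j mod m)}. exp (birkhoff l \<phi> (shift y)) * (exp (\<phi> y) * f y))"
  proof -
    have "(\<Sum>y\<in>?W. h y) = (\<Sum>y\<in>?W. if y 0 \<in> D (j mod m) then exp (birkhoff l \<phi> (shift y)) * (exp (\<phi> y) * f y) else 0)"
      by (rule sum.cong) (auto simp: h_def)
    then show ?thesis by (simp only: sum.inter_filter[OF finW, symmetric])
  qed
  also have "\<dots> = Qgen j (Suc l) f x"
    unfolding Qgen_def Y_Suc[symmetric] birkhoff_Suc
    by (simp add: exp_add algebra_simps)
  finally show ?thesis by simp
qed

lemma Y_0: "x \<in> Sg \<Longrightarrow> Y j 0 x = {x}"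
  unfolding Y_def by auto

lemma Qgen_Pw: "x \<in> Sg \<Longrightarrow> Qgen j l f x = Pw j l f x"
proof (induction l arbitrary: j f)
  case 0 then show ?case by (simp add: Qgen_def Y_0 birkhoff_def)
next
  case (Suc l)
  then show ?case by (simp add: Qgen_step)
qed

end


context sft begin

abbreviation "Om i \<equiv> Omega \<Delta> A D i"

lemma SD_Sg: "Sigma_sub \<Delta> A \<subseteq> Sg"
  using Dsub unfolding Sigma_sub_def by auto

lemma cyc_path:
  assumes i: "i < m" and y0: "y 0 \<in> D i"
    and st: "\<And>s. s < l \<Longrightarrow> y (Suc s) \<in> \<Delta> \<and> A (y s) (y (Suc s))"
  shows "s \<le> l \<Longrightarrow> y s \<in> D ((i + s) mod m)"
proof (induction s)
  case 0 then show ?case using y0 i by simp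
next
  case (Suc s)
  then have ys: "y s \<in> D ((i + s) mod m)" by simp
  have "y (Suc s) \<in> \<Delta>" "A (y s) (y (Suc s))" using st Suc.prems by auto
  then obtain t where t: "t < m" "y (Suc s) \<in> D t" using Delta_D by blast
  have "t = Suc (i + s) mod m" using D_step_mod[OF ys t(2) t(1)] \<open>A (y s) (y (Suc s))\<close> by simp
  then show ?case using t by simp
qed

lemma Y_in_Om:
  assumes i: "i < m" and x: "x \<in> Om i" and y: "y \<in> Y i l x"
  shows "y \<in> Om i"
proof -
  have ySg: "y \<in> Sg" and sh: "(shift ^^ l) y = x" and yD: "\<And>s. s < l \<Longrightarrow> y s \<in> D ((i + s) mod m)"
    using y unfolding Y_def by auto
  have xD: "x \<in> Sigma_sub \<Delta> A" "x 0 \<in> D i" using x unfolding Omega_def by auto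
  have yt: "y (t + l) = x t" for t using sh funpow_shift[of l y t] by simp
  have "y t \<in> \<Delta>" for t
  proof (cases "t < l")
    case True then show ?thesis using yD[of t] D_sub[of "(i + t) mod m"] m_pos by auto
  next
    case False
    then have "y t = x (t - l)" using yt[of "t - l"] by simp
    then show ?thesis using xD unfolding Sigma_sub_def by auto
  qed
  moreover have "\<forall>t. A (y t) (y (Suc t))" using ySg unfolding Sigma_sub_def by auto
  moreover have "y 0 \<in> D i"
  proof (cases "l = 0")
    case True then show ?thesis using sh xD by simp
  next
    case False then show ?thesis using yD[of 0] i by simp
  qed
  ultimately show ?thesis unfolding Omega_def Sigma_sub_def by auto
qed

lemma succ_ex: "a \<in> \<Delta> \<Longrightarrow> \<exists>b\<in>\<Delta>. A a b"
proof -
  assume a: "a \<in> \<Delta>"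
  then obtain n where n: "n > 0" "(a, a) \<in> adj \<Delta> A ^^ n" using irrD unfolding irreducible_on_def by blast
  then obtain f where f: "f 0 = a" "\<forall>i<n. (f i, f (Suc i)) \<in> adj \<Delta> A" unfolding relpow_fun_conv by blast
  then have "(a, f 1) \<in> adj \<Delta> A" using n by (metis One_nat_def)
  then show ?thesis unfolding adj_def by auto
qed

definition sc :: "nat \<Rightarrow> nat" where "sc a = (SOME b. b \<in> \<Delta> \<and> A a b)"

lemma sc: "a \<in> \<Delta> \<Longrightarrow> sc a \<in> \<Delta> \<and> A a (sc a)"
  unfolding sc_def using succ_ex by (metis (mono_tags, lifting) someI_ex)

lemma sc_iter: "a \<in> \<Delta> \<Longrightarrow> (sc ^^ k) a \<in> \<Delta>"
  by (induction k) (auto simp: sc)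

lemma extend:
  assumes i: "i < m" and n: "l \<ge> 1" and y: "y \<in> Y i l x"
  shows "\<exists>z\<in>Om i. \<forall>t<l. z t = y t"
proof -
  have ySg: "y \<in> Sg" and yD: "\<And>s. s < l \<Longrightarrow> y s \<in> D ((i + s) mod m)"
    using y unfolding Y_def by auto
  have yDelta: "s < l \<Longrightarrow> y s \<in> \<Delta>" for s using yD[of s] D_sub[of "(i + s) mod m"] m_pos by auto
  define z where "z t = (if t < l then y t else (sc ^^ (t - (l - 1))) (y (l - 1)))" for t
  have zhi: "z t = (sc ^^ (t - (l - 1))) (y (l - 1))" if "t \<ge> l - 1" for t
  proof (cases "t < l")
    case True then have "t = l - 1" using that by simp
    then show ?thesis using True by (simp add: z_def)
  qed (simp add: z_def)
  have ylast: "y (l - 1) \<in> \<Delta>" using yDelta n by simp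
  have zD: "z t \<in> \<Delta>" for t
    using ylast by (cases "t < l") (simp_all add: z_def yDelta sc_iter)
  have zA: "A (z t) (z (Suc t))" for t
  proof (cases "Suc t < l")
    case True then show ?thesis using ySg unfolding z_def Sigma_sub_def by auto
  next
    case False
    then have "t \<ge> l - 1" by simp
    then have "z t = (sc ^^ (t - (l - 1))) (y (l - 1))" "z (Suc t) = (sc ^^ (Suc t - (l - 1))) (y (l - 1))"
      using zhi by auto
    moreover have "Suc t - (l - 1) = Suc (t - (l - 1))" using \<open>t \<ge> l - 1\<close> by simp
    ultimately show ?thesis using sc[OF sc_iter[OF ylast]] by simp
  qed
  have "z \<in> Om i"
    unfolding Omega_def Sigma_sub_def using zD zA yD[of 0] n i by (auto simp: z_def)
  moreover have "\<forall>t<l. z t = y t" by (simp add: z_def)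
  ultimately show ?thesis by blast
qed


lemma mod_aux: "(i + l) mod m = i \<Longrightarrow> i < (m::nat) \<Longrightarrow> l mod m = 0"
  by (metis add.commute add_right_cancel div_mod_decomp mod_mult_self2_is_0)

lemma path_to:
  assumes i: "i < m" and z: "z \<in> Om i" and N: "N \<ge> 1" and b: "b \<in> D i"
  shows "\<exists>n\<ge>1. \<forall>x\<in>Sg. x 0 = b \<longrightarrow> (\<exists>y\<in>Y i (n * m) x. \<forall>t<N. y t = z t)"
proof -
  have zS: "z \<in> Sigma_sub \<Delta> A" and z0: "z 0 \<in> D i" using z unfolding Omega_def by auto
  have zN: "z (N - 1) \<in> \<Delta>" using zS unfolding Sigma_sub_def by auto
  have bD: "b \<in> \<Delta>" using b D_sub[OF i] by auto
  obtain p where p: "p > 0" "(z (N - 1), b) \<in> adj \<Delta> A ^^ p"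
    using irrD zN bD unfolding irreducible_on_def by blast
  then obtain q where q0: "q 0 = z (N - 1)" and qp: "q p = b" and qs: "\<And>r. r < p \<Longrightarrow> (q r, q (Suc r)) \<in> adj \<Delta> A"
    unfolding relpow_fun_conv by blast
  have qD: "q r \<in> \<Delta>" if "r \<le> p" for r
  proof (cases "r < p")
    case True then show ?thesis using qs[of r] unfolding adj_def by auto
  next
    case False then show ?thesis using that qp bD by simp
  qed
  have qA: "A (q r) (q (Suc r))" if "r < p" for r using qs[OF that] unfolding adj_def by auto
  define l where "l = N - 1 + p"
  have lN: "N \<le> l" using p N unfolding l_def by simp
  define n where "n = max 1 (l div m)"
  show ?thesis
  proof (intro exI[of _ n] conjI allI ballI impI)
    show "1 \<le> n" unfolding n_def by simp
  next
    fix x assume x: "x \<in> Sg" and x0: "x 0 = b"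
    define y where "y t = (if t < N then z t else if t \<le> l then q (t - (N - 1)) else x (t - l))" for t
    have ylo: "y t = z t" if "t < N" for t using that by (simp add: y_def)
    have ymid: "y t = q (t - (N - 1))" if "N - 1 \<le> t" "t \<le> l" for t
    proof (cases "t < N")
      case True then have "t = N - 1" using that by simp
      then show ?thesis using True q0 by (simp add: y_def)
    qed (use that in \<open>simp add: y_def\<close>)
    have yhi: "y t = x (t - l)" if "l \<le> t" for t
    proof (cases "t = l")
      case True
      then have "y t = q (t - (N - 1))" using lN by (intro ymid) auto
      also have "\<dots> = b" using True qp unfolding l_def by simp
      finally show ?thesis using True x0 by simp
    next
      case False then show ?thesis using that lN by (simp add: y_def)
    qed
    have yDel: "y t \<in> \<Delta>" if "t \<le> l" for t
    proof (cases "t < N")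
      case True then show ?thesis using ylo zS unfolding Sigma_sub_def by auto
    next
      case False then show ?thesis using ymid[of t] that qD[of "t - (N - 1)"] unfolding l_def by auto
    qed
    have yA: "A (y t) (y (Suc t))" for t
    proof (cases "Suc t < N")
      case True then show ?thesis using ylo[of t] ylo[of "Suc t"] zS unfolding Sigma_sub_def by auto
    next
      case False
      show ?thesis
      proof (cases "Suc t \<le> l")
        case True
        then have "y t = q (t - (N - 1))" "y (Suc t) = q (Suc (t - (N - 1)))"
          using False ymid[of t] ymid[of "Suc t"] by (auto simp: Suc_diff_le)
        moreover have "t - (N - 1) < p" using True False unfolding l_def by auto
        ultimately show ?thesis using qA by simp
      next
        case False
        then have "y t = x (t - l)" "y (Suc t) = x (Suc (t - l))" using yhi by (auto simp: Suc_diff_le)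
        then show ?thesis using x unfolding Sigma_sub_def by auto
      qed
    qed
    have ySg: "y \<in> Sg"
      unfolding Sigma_sub_def
    proof (intro CollectI conjI allI)
      fix t show "y t \<in> {1..L}"
      proof (cases "t \<le> l")
        case True then show ?thesis using yDel[OF True] Dsub by blast
      next
        case False then show ?thesis using yhi[of t] x unfolding Sigma_sub_def by auto
      qed
    qed (rule yA)
    have y0: "y 0 \<in> D i" using ylo[of 0] N z0 by simp
    have ycyc: "s \<le> l \<Longrightarrow> y s \<in> D ((i + s) mod m)" for s
      by (rule cyc_path[of i y l s, OF i y0]) (use yDel yA in auto)
    have "y l \<in> D ((i + l) mod m)" using ycyc by simp
    moreover have "y l = b" using yhi[of l] x0 by simp
    ultimately have "(i + l) mod m = i" using D_disj[of "(i + l) mod m" i b] b i m_pos by auto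
    then have lm: "l mod m = 0" using i by (rule mod_aux)
    have ldm: "l div m * m = l" using lm div_mult_mod_eq[of l m] by simp
    have "l div m \<noteq> 0"
    proof
      assume "l div m = 0" then have "l = 0" using ldm by simp
      then show False using lN N by simp
    qed
    then have "n = l div m" unfolding n_def by simp
    then have nm: "n * m = l" using ldm by simp
    have "y \<in> Y i (n * m) x"
      unfolding Y_def nm
    proof (intro CollectI conjI allI impI ySg)
      show "(shift ^^ l) y = x"
      proof
        fix t show "(shift ^^ l) y t = x t" using funpow_shift[of l y t] yhi[of "t + l"] by simp
      qed
    next
      fix s assume "s < l" then show "y s \<in> D ((i + s) mod m)" using ycyc by simp
    qed
    moreover have "\<forall>t<N. y t = z t" using ylo by simp
    ultimately show "\<exists>y\<in>Y i (n * m) x. \<forall>t<N. y t = z t" by blast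
  qed
qed

end


context sft begin

definition eig :: "real \<Rightarrow> nat \<Rightarrow> ((nat \<Rightarrow> nat) \<Rightarrow> real) \<Rightarrow> bool" where
  "eig lam i w \<longleftrightarrow> CB w \<and> (\<forall>n. \<forall>x\<in>Sg. Pw i (n * m) w x = lam ^ n * w x)"

lemma shift_iter_Sg: "y \<in> Sg \<Longrightarrow> (shift ^^ k) y \<in> Sg"
  by (induction k) (use Sg_shift in auto)

lemma Om_Sg: "x \<in> Om i \<Longrightarrow> x \<in> Sg"
  using SD_Sg unfolding Omega_def by auto

lemma birkhoff_lower: assumes "y \<in> Sg" "\<And>x. x \<in> Sg \<Longrightarrow> \<bar>\<phi> x\<bar> \<le> B"
  shows "birkhoff l \<phi> y \<ge> - (real l * B)"
proof -
  have "(\<Sum>k<l. - B) \<le> birkhoff l \<phi> y"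
    unfolding birkhoff_def
  proof (rule sum_mono)
    fix k have "\<bar>\<phi> ((shift ^^ k) y)\<bar> \<le> B" using assms shift_iter_Sg by blast
    then show "- B \<le> \<phi> ((shift ^^ k) y)" by linarith
  qed
  then show ?thesis by simp
qed

lemma Qgen_ge_term:
  assumes "y \<in> Y j l x" "\<And>y'. y' \<in> Y j l x \<Longrightarrow> 0 \<le> f y'"
  shows "exp (birkhoff l \<phi> y) * f y \<le> Qgen j l f x"
  unfolding Qgen_def
  by (rule member_le_sum[OF assms(1) _ finite_Y]) (use assms(2) in auto)

lemma zero_prop:
  assumes lam: "lam > 0" and i: "i < m" and w: "eig lam i w"
    and nn: "\<And>x. x \<in> Om i \<Longrightarrow> 0 \<le> w x"
    and small: "\<And>e. e > 0 \<Longrightarrow> \<exists>x\<in>Om i. w x < e"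
    and z: "z \<in> Om i"
  shows "w z = 0"
proof (rule ccontr)
  assume "w z \<noteq> 0"
  then have wz: "w z > 0" using nn[OF z] by simp
  define e where "e = w z / 2"
  have e: "e > 0" using wz by (simp add: e_def)
  have wCB: "CB w" and weig: "\<And>n x. x \<in> Sg \<Longrightarrow> Pw i (n * m) w x = lam ^ n * w x"
    using w unfolding eig_def by auto
  obtain N0 where N0: "\<forall>x\<in>Sg. \<forall>y\<in>Sg. (\<forall>t<N0. x t = y t) \<longrightarrow> \<bar>w x - w y\<bar> \<le> e"
    using wCB e unfolding CB_def cc_def by blast
  have "bnd \<phi>" using phi_CB unfolding CB_def by auto
  then obtain Phi where Phi0: "0 \<le> Phi" and Phi: "\<And>x. x \<in> Sg \<Longrightarrow> \<bar>\<phi> x\<bar> \<le> Phi" by (metis bndE)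
  have "\<forall>b\<in>D i. \<exists>n. n \<ge> 1 \<and> (\<forall>x\<in>Sg. x 0 = b \<longrightarrow> (\<exists>y\<in>Y i (n * m) x. \<forall>t<Suc N0. y t = z t))"
    using path_to[OF i z] by auto
  then obtain nb where nb: "\<And>b. b \<in> D i \<Longrightarrow> nb b \<ge> 1"
    and nbp: "\<And>b x. b \<in> D i \<Longrightarrow> x \<in> Sg \<Longrightarrow> x 0 = b \<Longrightarrow> \<exists>y\<in>Y i (nb b * m) x. \<forall>t<Suc N0. y t = z t"
    by metis
  have finD: "finite (D i)" using D_sub[OF i] finite_Delta finite_subset by blast
  define K where "K = Max (nb ` D i)"
  define c0 where "c0 = inverse lam * exp (- (real m * Phi))"
  have c0: "c0 > 0" using lam by (simp add: c0_def)
  define \<kappa> where "\<kappa> = (min 1 c0) ^ K"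
  have \<kappa>: "\<kappa> > 0" using c0 by (simp add: \<kappa>_def)
  obtain x where x: "x \<in> Om i" and wx: "w x < \<kappa> * e" using small[of "\<kappa> * e"] \<kappa> e by auto
  have xSg: "x \<in> Sg" using Om_Sg[OF x] .
  have b: "x 0 \<in> D i" using x unfolding Omega_def by auto
  define n where "n = nb (x 0)"
  have nK: "n \<le> K" unfolding n_def K_def using finD b by (intro Max_ge) auto
  obtain y where y: "y \<in> Y i (n * m) x" and yz: "\<forall>t<Suc N0. y t = z t"
    using nbp[OF b xSg refl] unfolding n_def by blast
  have ySg: "y \<in> Sg" using y unfolding Y_def by auto
  have "w y \<ge> w z - e" using N0 ySg Om_Sg[OF z] yz by fastforce
  then have wy: "w y \<ge> e" unfolding e_def by simp
  have "lam ^ n * w x = Qgen i (n * m) w x" using weig[OF xSg, of n] Qgen_Pw[OF xSg] by simp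
  also have "\<dots> \<ge> exp (birkhoff (n * m) \<phi> y) * w y"
    by (rule Qgen_ge_term[OF y]) (use nn Y_in_Om[OF i x] in blast)
  finally have "exp (birkhoff (n * m) \<phi> y) * w y \<le> lam ^ n * w x" .
  moreover have "exp (- (real (n * m) * Phi)) \<le> exp (birkhoff (n * m) \<phi> y)"
    using birkhoff_lower[OF ySg Phi, of "n * m"] by (simp only: exp_le_cancel_iff)
  ultimately have "exp (- (real (n * m) * Phi)) * w y \<le> lam ^ n * w x"
    using wy e by (meson less_le_trans mult_right_mono order_trans less_imp_le)
  then have "inverse (lam ^ n) * exp (- (real (n * m) * Phi)) * w y \<le> w x"
    using lam by (simp add: field_simps)
  moreover have "inverse (lam ^ n) * exp (- (real (n * m) * Phi)) = c0 ^ n"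
  proof -
    have "exp (- (real (n * m) * Phi)) = exp (- (real m * Phi)) ^ n"
      by (simp add: exp_of_nat_mult[symmetric] algebra_simps)
    then show ?thesis unfolding c0_def by (simp add: power_mult_distrib power_inverse)
  qed
  moreover have "\<kappa> \<le> c0 ^ n"
  proof -
    have "\<kappa> \<le> (min 1 c0) ^ n" unfolding \<kappa>_def using c0 nK by (intro power_decreasing) auto
    also have "\<dots> \<le> c0 ^ n" using c0 by (intro power_mono) auto
    finally show ?thesis .
  qed
  ultimately have "\<kappa> * e \<le> w x"
    using wy e \<kappa> by (smt (verit, ccfv_SIG) mult_mono)
  then show False using wx by simp
qed


lemma eps_zero: assumes "\<And>e. e > 0 \<Longrightarrow> \<bar>v\<bar> \<le> e * C" shows "(v::real) = 0"
proof (rule ccontr)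
  assume "v \<noteq> 0"
  define e where "e = \<bar>v\<bar> / (2 * (\<bar>C\<bar> + 1))"
  have e: "e > 0" using \<open>v \<noteq> 0\<close> by (simp add: e_def add_pos_nonneg)
  have "\<bar>v\<bar> \<le> e * C" using assms[OF e] .
  also have "\<dots> \<le> e * (\<bar>C\<bar> + 1)" using e by (intro mult_left_mono) auto
  also have "\<dots> = \<bar>v\<bar> / 2" unfolding e_def by (simp add: field_simps)
  finally show False using \<open>v \<noteq> 0\<close> by simp
qed

lemma extension:
  assumes lam: "lam > 0" and i: "i < m" and v: "eig lam i v"
    and z0: "\<And>x. x \<in> Om i \<Longrightarrow> v x = 0"
    and Hb: "\<And>x. x \<in> Sg \<Longrightarrow> \<exists>C. \<forall>n0. \<exists>n\<ge>n0. inverse (lam ^ n) * Pw i (n * m) (\<lambda>_. 1) x \<le> C"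
    and x: "x \<in> Sg"
  shows "v x = 0"
proof -
  have vCB: "CB v" and veig: "\<And>n x. x \<in> Sg \<Longrightarrow> Pw i (n * m) v x = lam ^ n * v x"
    using v unfolding eig_def by auto
  obtain C where C: "\<And>n0. \<exists>n\<ge>n0. inverse (lam ^ n) * Pw i (n * m) (\<lambda>_. 1) x \<le> C" using Hb[OF x] by blast
  show ?thesis
  proof (rule eps_zero[where C = C])
    fix e :: real assume e: "e > 0"
    obtain N where N: "\<forall>x\<in>Sg. \<forall>y\<in>Sg. (\<forall>t<N. x t = y t) \<longrightarrow> \<bar>v x - v y\<bar> \<le> e"
      using vCB e unfolding CB_def cc_def by blast
    obtain n where n: "n \<ge> Suc N" and nC: "inverse (lam ^ n) * Pw i (n * m) (\<lambda>_. 1) x \<le> C" using C by blast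
    have "n \<le> n * m" using m_pos by simp
    then have nm: "n * m \<ge> N" "n * m \<ge> 1" using n by linarith+
    have vy: "\<bar>v y\<bar> \<le> e" if y: "y \<in> Y i (n * m) x" for y
    proof -
      obtain z where z: "z \<in> Om i" and zy: "\<forall>t<n * m. z t = y t" using extend[OF i nm(2) y] by blast
      have "y \<in> Sg" using y unfolding Y_def by auto
      then have "\<bar>v y - v z\<bar> \<le> e" using N Om_Sg[OF z] zy nm(1) by fastforce
      then show ?thesis using z0[OF z] by simp
    qed
    have "lam ^ n * \<bar>v x\<bar> = \<bar>Qgen i (n * m) v x\<bar>"
      using veig[OF x, of n] Qgen_Pw[OF x] lam by (simp add: abs_mult)
    also have "\<dots> \<le> (\<Sum>y\<in>Y i (n * m) x. \<bar>exp (birkhoff (n * m) \<phi> y) * v y\<bar>)"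
      unfolding Qgen_def by (rule sum_abs)
    also have "\<dots> \<le> (\<Sum>y\<in>Y i (n * m) x. exp (birkhoff (n * m) \<phi> y) * e)"
      by (rule sum_mono) (use vy in \<open>auto simp: abs_mult intro: mult_left_mono\<close>)
    also have "\<dots> = e * Qgen i (n * m) (\<lambda>_. 1) x"
      unfolding Qgen_def by (simp add: sum_distrib_left mult.commute)
    also have "\<dots> = e * Pw i (n * m) (\<lambda>_. 1) x" using Qgen_Pw[OF x] by simp
    finally have "\<bar>v x\<bar> \<le> e * (inverse (lam ^ n) * Pw i (n * m) (\<lambda>_. 1) x)"
      using lam by (simp add: field_simps)
    also have "\<dots> \<le> e * C" using nC e by (intro mult_left_mono) auto
    finally show "\<bar>v x\<bar> \<le> e * C" .
  qed
qed

lemma eig_lin: assumes "eig lam i f" "eig lam i g" shows "eig lam i (\<lambda>y. a * f y + b * g y)"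
  unfolding eig_def
proof (intro conjI allI ballI)
  show "CB (\<lambda>y. a * f y + b * g y)" using assms CB_lin unfolding eig_def by blast
next
  fix n x assume x: "x \<in> Sg"
  have "Pw i (n * m) (\<lambda>y. a * f y + b * g y) x = a * Pw i (n * m) f x + b * Pw i (n * m) g x"
    using goodD(1)[OF good_Pw x] .
  moreover have "Pw i (n * m) f x = lam ^ n * f x" "Pw i (n * m) g x = lam ^ n * g x"
    using assms x unfolding eig_def by blast+
  ultimately show "Pw i (n * m) (\<lambda>y. a * f y + b * g y) x = lam ^ n * (a * f x + b * g x)"
    by (simp add: algebra_simps)
qed

lemma uniqueness:
  assumes lam: "lam > 0" and i: "i < m" and u: "eig lam i u" and h: "eig lam i h"
    and hnn: "\<And>x. x \<in> Sg \<Longrightarrow> 0 \<le> h x"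
    and hne: "\<exists>x\<in>Om i. h x \<noteq> 0"
    and Hb: "\<And>x. x \<in> Sg \<Longrightarrow> \<exists>C. \<forall>n0. \<exists>n\<ge>n0. inverse (lam ^ n) * Pw i (n * m) (\<lambda>_. 1) x \<le> C"
  shows "\<exists>t. \<forall>x\<in>Sg. u x = t * h x"
proof -
  have "\<exists>\<delta>>0. \<forall>x\<in>Om i. h x \<ge> \<delta>"
  proof (rule ccontr)
    assume "\<not> ?thesis"
    then have "\<And>e. e > 0 \<Longrightarrow> \<exists>x\<in>Om i. h x < e" by (meson not_le)
    then have "\<forall>z\<in>Om i. h z = 0" using zero_prop[OF lam i h] hnn Om_Sg by blast
    then show False using hne by blast
  qed
  then obtain \<delta> where \<delta>: "\<delta> > 0" and hd: "\<And>x. x \<in> Om i \<Longrightarrow> h x \<ge> \<delta>" by blast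
  have "bnd u" "bnd h" using u h unfolding eig_def CB_def by auto
  then obtain Bu Bh where Bu0: "0 \<le> Bu" and Bu: "\<And>x. x \<in> Sg \<Longrightarrow> \<bar>u x\<bar> \<le> Bu"
    and Bh0: "0 \<le> Bh" and Bh: "\<And>x. x \<in> Sg \<Longrightarrow> \<bar>h x\<bar> \<le> Bh" by (metis bndE)
  have ne: "Om i \<noteq> {}" using hne by auto
  define R where "R = (\<lambda>x. u x / h x) ` Om i"
  have Rne: "R \<noteq> {}" using ne by (simp add: R_def)
  have Rb: "r \<le> Bu / \<delta>" if rR: "r \<in> R" for r
  proof -
    obtain x where x: "x \<in> Om i" and r: "r = u x / h x" using rR unfolding R_def by blast
    have hx: "h x \<ge> \<delta>" using hd[OF x] .
    have "u x / h x \<le> \<bar>u x\<bar> / h x" using hx \<delta> by (intro divide_right_mono) auto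
    also have "\<dots> \<le> Bu / h x" using Bu[OF Om_Sg[OF x]] hx \<delta> by (intro divide_right_mono) auto
    also have "\<dots> \<le> Bu / \<delta>" using hx \<delta> Bu0 by (intro divide_left_mono) auto
    finally show ?thesis using r by simp
  qed
  then have bdd: "bdd_above R" by (meson bdd_above.I)
  define t where "t = Sup R"
  define w where "w = (\<lambda>y. t * h y + (-1) * u y)"
  have weig: "eig lam i w" unfolding w_def by (rule eig_lin[OF h u])
  have wnn: "0 \<le> w x" if x: "x \<in> Om i" for x
  proof -
    have "u x / h x \<le> t" unfolding t_def using x bdd by (intro cSup_upper) (auto simp: R_def)
    then have "u x \<le> t * h x" using hd[OF x] \<delta> by (simp add: divide_le_eq)
    then show ?thesis unfolding w_def by simp
  qed
  have wsmall: "\<exists>x\<in>Om i. w x < e" if e: "e > 0" for e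
  proof -
    have "t - e / (Bh + 1) < t" using e Bh0 by simp
    then obtain r where r: "r \<in> R" and tr: "t - e / (Bh + 1) < r"
      unfolding t_def using less_cSup_iff[OF Rne bdd] by blast
    obtain x where x: "x \<in> Om i" and rx: "r = u x / h x" using r unfolding R_def by blast
    have hx: "h x > 0" using hd[OF x] \<delta> by simp
    have hB: "h x \<le> Bh" using Bh[OF Om_Sg[OF x]] by simp
    have "w x = h x * (t - u x / h x)" unfolding w_def using hx by (simp add: field_simps)
    also have "\<dots> < h x * (e / (Bh + 1))" using tr rx hx by (intro mult_strict_left_mono) auto
    also have "\<dots> \<le> e"
    proof -
      have "h x * (e / (Bh + 1)) = e * (h x / (Bh + 1))" by simp
      also have "\<dots> \<le> e * 1" using hB Bh0 e by (intro mult_left_mono) auto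
      finally show ?thesis by simp
    qed
    finally show ?thesis using x by blast
  qed
  have wz: "\<And>z. z \<in> Om i \<Longrightarrow> w z = 0" using zero_prop[OF lam i weig wnn wsmall] by blast
  have "\<forall>x\<in>Sg. w x = 0" using extension[OF lam i weig wz Hb] by blast
  then show ?thesis unfolding w_def by (intro exI[of _ t]) auto
qed

end


context sft begin

lemma cc_cont: assumes "cc f" shows "continuous_on Sg f"
  unfolding continuous_on_topological
proof (intro ballI allI impI)
  fix x B assume x: "x \<in> Sg" and B: "open B" "f x \<in> B"
  obtain e where e: "e > 0" "ball (f x) e \<subseteq> B" using B open_contains_ball by blast
  obtain N where N: "\<forall>x\<in>Sg. \<forall>y\<in>Sg. (\<forall>t<N. x t = y t) \<longrightarrow> \<bar>f x - f y\<bar> \<le> e / 2"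
    using assms e unfolding cc_def by (meson half_gt_zero)
  define U where "U = (\<Inter>t\<in>{..<N}. (\<lambda>y. y t) -` {x t})"
  have "open U" unfolding U_def
    by (intro open_INT ballI open_vimage continuous_on_product_coordinates) (auto simp: open_discrete)
  moreover have "x \<in> U" unfolding U_def by auto
  moreover have "\<forall>y\<in>Sg. y \<in> U \<longrightarrow> f y \<in> B"
  proof (intro ballI impI)
    fix y assume y: "y \<in> Sg" "y \<in> U"
    then have "\<forall>t<N. x t = y t" unfolding U_def by auto
    then have "\<bar>f x - f y\<bar> \<le> e / 2" using N x y by blast
    then have "f y \<in> ball (f x) e" using e by (simp add: dist_real_def)
    then show "f y \<in> B" using e by blast
  qed
  ultimately show "\<exists>A. open A \<and> x \<in> A \<and> (\<forall>y\<in>Sg. y \<in> A \<longrightarrow> f y \<in> B)" by blast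
qed

lemma good_scale: "good T \<Longrightarrow> x \<in> Sg \<Longrightarrow> T (\<lambda>y. a * f y) x = a * T f x"
  using goodD(1)[of T x a f 0 f] by simp

lemma good_pow: assumes T: "good T" shows "good (T ^^ k)"
proof (induction k)
  case 0 then show ?case using good_id by (simp add: id_def)
next
  case (Suc k)
  have "T ^^ Suc k = (\<lambda>f. T ((T ^^ k) f))" by (simp add: fun_eq_iff)
  then show ?case using good_comp[OF T Suc.IH] by simp
qed

lemma good_ulim:
  assumes T: "good T" and F: "uniform_limit Sg F U sequentially"
  shows "uniform_limit Sg (\<lambda>n. T (F n)) (T U) sequentially"
  unfolding uniform_limit_iff
proof (intro allI impI)
  fix e :: real assume e: "e > 0"
  have "\<forall>\<^sub>F n in sequentially. \<forall>x\<in>Sg. dist (F n x) (U x) < e / 2"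
    using F e unfolding uniform_limit_iff by (meson half_gt_zero)
  then show "\<forall>\<^sub>F n in sequentially. \<forall>x\<in>Sg. dist (T (F n) x) (T U x) < e"
  proof (rule eventually_mono)
    fix n assume n: "\<forall>x\<in>Sg. dist (F n x) (U x) < e / 2"
    show "\<forall>x\<in>Sg. dist (T (F n) x) (T U x) < e"
    proof
      fix x assume x: "x \<in> Sg"
      have "T (F n) x - T U x = T (\<lambda>y. 1 * F n y + (-1) * U y) x"
        using goodD(1)[OF T x, of 1 "F n" "-1" U] by simp
      also have "\<bar>\<dots>\<bar> \<le> e / 2"
        using n e by (intro goodD(3)[OF T _ _ x]) (auto simp: dist_real_def)
      finally show "dist (T (F n) x) (T U x) < e" using e by (simp add: dist_real_def)
    qed
  qed
qed

lemma ulim_CB: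
  assumes F: "\<And>n. CB (F n)" and U: "uniform_limit Sg F U sequentially"
  shows "CB U"
proof -
  have ev: "\<exists>n. \<forall>x\<in>Sg. \<bar>F n x - U x\<bar> < e" if "e > 0" for e
  proof -
    have "\<forall>\<^sub>F n in sequentially. \<forall>x\<in>Sg. dist (F n x) (U x) < e" using U that unfolding uniform_limit_iff by blast
    then obtain N where "\<And>n. n \<ge> N \<Longrightarrow> \<forall>x\<in>Sg. dist (F n x) (U x) < e" unfolding eventually_sequentially by blast
    then have "\<forall>x\<in>Sg. dist (F N x) (U x) < e" by blast
    then show ?thesis unfolding dist_real_def by blast
  qed
  obtain n where n: "\<forall>x\<in>Sg. \<bar>F n x - U x\<bar> < 1" using ev[of 1] by auto
  have "bnd (F n)" using F unfolding CB_def by auto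
  then obtain B where B: "\<And>x. x \<in> Sg \<Longrightarrow> \<bar>F n x\<bar> \<le> B" by (metis bndE)
  have "bnd U" unfolding bnd_def
  proof (intro exI[of _ "B + 1"] ballI)
    fix x assume x: "x \<in> Sg"
    have "\<bar>F n x - U x\<bar> < 1" using n x by blast
    then show "\<bar>U x\<bar> \<le> B + 1" using B[OF x] by linarith
  qed
  moreover have "cc U" unfolding cc_def
  proof (intro allI impI)
    fix e :: real assume e: "e > 0"
    obtain n where n: "\<forall>x\<in>Sg. \<bar>F n x - U x\<bar> < e / 3" using ev[of "e / 3"] e by auto
    obtain N where N: "\<forall>x\<in>Sg. \<forall>y\<in>Sg. (\<forall>t<N. x t = y t) \<longrightarrow> \<bar>F n x - F n y\<bar> \<le> e / 3"
    proof -
      have e3: "e / 3 > 0" using e by simp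
      have "cc (F n)" using F[of n] unfolding CB_def by blast
      then obtain N where "\<forall>x\<in>Sg. \<forall>y\<in>Sg. (\<forall>t<N. x t = y t) \<longrightarrow> \<bar>F n x - F n y\<bar> \<le> e / 3"
        using e3 unfolding cc_def by blast
      then show ?thesis by (rule that)
    qed
    show "\<exists>N. \<forall>x\<in>Sg. \<forall>y\<in>Sg. (\<forall>t<N. x t = y t) \<longrightarrow> \<bar>U x - U y\<bar> \<le> e"
    proof (intro exI[of _ N] ballI impI)
      fix x y assume xy: "x \<in> Sg" "y \<in> Sg" "\<forall>t<N. x t = y t"
      have "\<bar>F n x - F n y\<bar> \<le> e / 3" using N xy by blast
      moreover have "\<bar>F n x - U x\<bar> < e / 3" "\<bar>F n y - U y\<bar> < e / 3" using n xy by blast+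
      ultimately show "\<bar>U x - U y\<bar> \<le> e" by linarith
    qed
  qed
  ultimately show ?thesis unfolding CB_def by blast
qed

lemma step_agree:
  assumes x: "x \<in> Sg" and x0: "x 0 \<in> D (Suc t mod m)"
    and FG: "\<And>y. y \<in> Sg \<Longrightarrow> y 0 \<in> D (t mod m) \<Longrightarrow> F y = G y"
  shows "op \<Delta> F x = M t G x"
  unfolding M_def op_cons[OF x]
proof (rule sum.cong[OF refl])
  fix a assume a: "a \<in> {a \<in> {1..L}. A a (x 0)}"
  have c: "cons a x \<in> Sg" using Sg_cons x a by auto
  have iff: "a \<in> \<Delta> \<longleftrightarrow> a \<in> D (t mod m)"
  proof
    assume "a \<in> \<Delta>"
    then obtain s where s: "s < m" "a \<in> D s" using Delta_D by blast
    have "Suc t mod m = Suc s mod m" using D_step_mod[of a s "x 0" "Suc t mod m"] s a x0 m_pos by simp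
    then have "s mod m = t mod m" by (metis Zero_not_Suc mod_Suc nat.inject)
    then show "a \<in> D (t mod m)" using s by simp
  next
    assume "a \<in> D (t mod m)" then show "a \<in> \<Delta>" using D_sub[of "t mod m"] m_pos by auto
  qed
  show "exp (\<phi> (cons a x)) * (F (cons a x) * ind \<Delta> (cons a x)) =
        exp (\<phi> (cons a x)) * (G (cons a x) * ind (D (t mod m)) (cons a x))"
    using iff FG[OF c] by (auto simp: ind_def)
qed

lemma Delta_pow_one:
  assumes k: "k \<ge> 1" and x: "x \<in> Sg" and x0: "x 0 \<in> D ((j + k) mod m)"
  shows "(op \<Delta> ^^ k) (\<lambda>_. 1) x = Pw j k (\<lambda>_. 1) x"
  using k x x0
proof (induction k arbitrary: x rule: dec_induct)
  case base
  have "op \<Delta> (\<lambda>_. 1) x = M j (\<lambda>_. 1) x"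
    by (rule step_agree) (use base in auto)
  then show ?case by simp
next
  case (step k)
  have "(op \<Delta> ^^ Suc k) (\<lambda>_. 1) x = op \<Delta> ((op \<Delta> ^^ k) (\<lambda>_. 1)) x" by simp
  also have "\<dots> = M (j + k) (Pw j k (\<lambda>_. 1)) x"
  proof (rule step_agree)
    show "x \<in> Sg" by fact
    show "x 0 \<in> D (Suc (j + k) mod m)" using step.prems by simp
    fix y assume "y \<in> Sg" "y 0 \<in> D ((j + k) mod m)"
    then show "(op \<Delta> ^^ k) (\<lambda>_. 1) y = Pw j k (\<lambda>_. 1) y" by (rule step.IH)
  qed
  also have "\<dots> = Pw j (Suc k) (\<lambda>_. 1) x" by (simp only: Pw_Suc_right)
  finally show ?case .
qed

end



locale sftm = sft +
  fixes P :: real and \<nu> :: "nat \<Rightarrow> (nat \<Rightarrow> nat) measure"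
  assumes nu: "\<forall>j<m. prob_space (\<nu> j) \<and>
              sets (\<nu> j) = sets (restrict_space borel (Sigma_sub {1..L} A)) \<and>
              emeasure (\<nu> j) (Omega \<Delta> A D j) = 1 \<and>
              (\<forall>\<psi>. continuous_on (Sigma_sub {1..L} A) \<psi> \<longrightarrow>
                 (\<integral>x. transfer_m {1..L} A D m j \<phi> \<psi> x \<partial>\<nu> j) =
                   exp (real m * P) * (\<integral>x. \<psi> x \<partial>\<nu> j))"
begin

definition "lam = exp (real m * P)"

lemma lam_pos: "lam > 0" by (simp add: lam_def)

context
  fixes i assumes i: "i < m"
begin

lemma nu_prob: "prob_space (\<nu> i)" using nu i by blast

lemma nu_sets: "sets (\<nu> i) = sets (restrict_space borel Sg)" using nu i by blast

lemma nu_space: "space (\<nu> i) = Sg"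
  using sets_eq_imp_space_eq[OF nu_sets] by (simp add: space_restrict_space)

lemma nu_Om: "emeasure (\<nu> i) (Om i) = 1" using nu i by blast

lemma nu_eq: "continuous_on Sg \<psi> \<Longrightarrow> (\<integral>x. transfer_m {1..L} A D m i \<phi> \<psi> x \<partial>\<nu> i) = lam * (\<integral>x. \<psi> x \<partial>\<nu> i)"
  using nu i unfolding lam_def by blast

lemma nu_meas: "CB f \<Longrightarrow> f \<in> borel_measurable (\<nu> i)"
  using borel_measurable_continuous_on_restrict[OF cc_cont[of f]]
    measurable_cong_sets[OF nu_sets refl] unfolding CB_def by blast

lemma nu_int: assumes f: "CB f" shows "integrable (\<nu> i) f"
proof -
  interpret prob_space "\<nu> i" by (rule nu_prob)
  have "bnd f" using f unfolding CB_def by auto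
  then obtain B where B: "\<And>x. x \<in> Sg \<Longrightarrow> \<bar>f x\<bar> \<le> B" by (metis bndE)
  show ?thesis
    by (rule integrable_const_bound[where B = B]) (use B nu_space nu_meas[OF f] in auto)
qed

lemma nu_AE: "AE x in \<nu> i. x \<in> Om i"
proof -
  interpret prob_space "\<nu> i" by (rule nu_prob)
  have "prob (Om i) = 1" using nu_Om by (simp add: measure_def)
  then show ?thesis by (rule AE_prob_1)
qed

lemma nu_step: assumes f: "CB f" shows "(\<integral>x. Pw i m f x \<partial>\<nu> i) = lam * (\<integral>x. f x \<partial>\<nu> i)"
proof -
  have "(\<integral>x. Pw i m f x \<partial>\<nu> i) = (\<integral>x. transfer_m {1..L} A D m i \<phi> f x \<partial>\<nu> i)"
  proof (rule Bochner_Integration.integral_cong[OF refl])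
    fix x assume "x \<in> space (\<nu> i)"
    then have x: "x \<in> Sg" by (simp add: nu_space)
    have "transfer_m {1..L} A D m i \<phi> f x = Qgen i m f x" by (rule transfer_m_Qgen)
    then show "Pw i m f x = transfer_m {1..L} A D m i \<phi> f x" using Qgen_Pw[OF x] by simp
  qed
  also have "\<dots> = lam * (\<integral>x. f x \<partial>\<nu> i)"
    using nu_eq cc_cont f unfolding CB_def by blast
  finally show ?thesis .
qed

lemma nu_Pw: assumes g: "CB g" shows "(\<integral>x. Pw i (n * m) g x \<partial>\<nu> i) = lam ^ n * (\<integral>x. g x \<partial>\<nu> i)"
proof (induction n)
  case 0 then show ?case by simp
next
  case (Suc n)
  have "(\<integral>x. Pw i (Suc n * m) g x \<partial>\<nu> i) = (\<integral>x. Pw i m (Pw i (n * m) g) x \<partial>\<nu> i)"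
    by (simp only: Pw_block)
  also have "\<dots> = lam * (\<integral>x. Pw i (n * m) g x \<partial>\<nu> i)"
    by (rule nu_step) (rule goodD(5)[OF good_Pw g])
  finally show ?case using Suc by simp
qed

lemma GL:
  assumes g: "CB g"
    and U: "uniform_limit Sg (\<lambda>n x. inverse (lam ^ n) * Pw i (n * m) g x) U sequentially"
  shows "eig lam i U" and "(\<integral>x. U x \<partial>\<nu> i) = (\<integral>x. g x \<partial>\<nu> i)"
proof -
  define F where "F n x = inverse (lam ^ n) * Pw i (n * m) g x" for n x
  have U': "uniform_limit Sg F U sequentially" using U unfolding F_def .
  have FCB: "CB (F n)" for n
  proof -
    have "CB (\<lambda>y. inverse (lam ^ n) * Pw i (n * m) g y + 0 * (0::real))"
      by (rule CB_lin[OF goodD(5)[OF good_Pw g] CB_const])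
    then show ?thesis unfolding F_def by simp
  qed
  have UCB: "CB U" by (rule ulim_CB[OF FCB U'])
  show "eig lam i U"
    unfolding eig_def
  proof (intro conjI allI ballI UCB)
    fix p x assume x: "x \<in> Sg"
    have l1: "(\<lambda>n. Pw i (p * m) (F n) x) \<longlonglongrightarrow> Pw i (p * m) U x"
      using tendsto_uniform_limitI[OF good_ulim[OF good_Pw U'] x] .
    have eq: "Pw i (p * m) (F n) x = lam ^ p * F (n + p) x" for n
    proof -
      have "Pw i (p * m) (F n) x = inverse (lam ^ n) * Pw i (p * m) (Pw i (n * m) g) x"
        unfolding F_def by (rule good_scale[OF good_Pw x])
      also have "Pw i (p * m) (Pw i (n * m) g) = Pw i ((n + p) * m) g"
      proof -
        have "Pw i (n * m + p * m) g = Pw (i + n * m) (p * m) (Pw i (n * m) g)" by (rule Pw_add)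
        moreover have "Pw (i + n * m) (p * m) = Pw i (p * m)" by (rule Pw_mod) simp
        ultimately show ?thesis by (simp add: add_mult_distrib)
      qed
      also have "inverse (lam ^ n) * Pw i ((n + p) * m) g x = lam ^ p * F (n + p) x"
        unfolding F_def using lam_pos by (simp add: power_add field_simps)
      finally show ?thesis .
    qed
    have "(\<lambda>n. F (n + p) x) \<longlonglongrightarrow> U x"
      using LIMSEQ_ignore_initial_segment[OF tendsto_uniform_limitI[OF U' x]] .
    then have l2: "(\<lambda>n. Pw i (p * m) (F n) x) \<longlonglongrightarrow> lam ^ p * U x"
      unfolding eq by (intro tendsto_mult_left)
    show "Pw i (p * m) U x = lam ^ p * U x" using LIMSEQ_unique[OF l1 l2] .
  qed
  interpret prob_space "\<nu> i" by (rule nu_prob)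
  have IF: "(\<integral>x. F n x \<partial>\<nu> i) = (\<integral>x. g x \<partial>\<nu> i)" for n
    unfolding F_def using nu_Pw[OF g, of n] lam_pos by simp
  show "(\<integral>x. U x \<partial>\<nu> i) = (\<integral>x. g x \<partial>\<nu> i)"
  proof -
    have "(\<integral>x. g x \<partial>\<nu> i) - (\<integral>x. U x \<partial>\<nu> i) = 0"
    proof (rule eps_zero[where C = 1])
      fix e :: real assume e: "e > 0"
      have "\<forall>\<^sub>F n in sequentially. \<forall>x\<in>Sg. dist (F n x) (U x) < e" using U' e unfolding uniform_limit_iff by blast
      then obtain N where "\<And>n. n \<ge> N \<Longrightarrow> \<forall>x\<in>Sg. dist (F n x) (U x) < e" unfolding eventually_sequentially by blast
      then have Nb: "\<forall>x\<in>Sg. \<bar>F N x - U x\<bar> \<le> e" by (fastforce simp: dist_real_def)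
      have "(\<integral>x. g x \<partial>\<nu> i) - (\<integral>x. U x \<partial>\<nu> i) = (\<integral>x. F N x - U x \<partial>\<nu> i)"
        using IF[of N] nu_int[OF FCB] nu_int[OF UCB] by simp
      also have "\<bar>\<dots>\<bar> \<le> (\<integral>x. \<bar>F N x - U x\<bar> \<partial>\<nu> i)"
        using integral_norm_bound[of "\<nu> i" "\<lambda>x. F N x - U x"] by simp
      also have "\<dots> \<le> (\<integral>x. e \<partial>\<nu> i)"
        by (rule integral_mono) (use Nb nu_space nu_int[OF CB_const] nu_int[OF CB_lin[OF FCB UCB, of 1 N "-1"]] in auto)
      also have "\<dots> = e" using prob_space by simp
      finally show "\<bar>(\<integral>x. g x \<partial>\<nu> i) - (\<integral>x. U x \<partial>\<nu> i)\<bar> \<le> e * 1" by simp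
    qed
    then show ?thesis by simp
  qed
qed

end


lemma tm_iter: "x \<in> Sg \<Longrightarrow> ((transfer_m {1..L} A D m j \<phi>) ^^ n) f x = Pw j (n * m) f x"
proof (induction n arbitrary: x)
  case 0 then show ?case by simp
next
  case (Suc n)
  let ?T = "transfer_m {1..L} A D m j \<phi>"
  have "(?T ^^ Suc n) f x = ?T ((?T ^^ n) f) x" by simp
  also have "\<dots> = Qgen j m ((?T ^^ n) f) x" by (rule transfer_m_Qgen)
  also have "\<dots> = Pw j m ((?T ^^ n) f) x" by (rule Qgen_Pw[OF Suc.prems])
  also have "\<dots> = Pw j m (Pw j (n * m) f) x"
    by (rule goodD(2)[OF good_Pw _ Suc.prems]) (rule Suc.IH)
  also have "\<dots> = Pw j (Suc n * m) f x" by (simp only: Pw_block)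
  finally show ?case .
qed

lemma exp_lam: "exp (- (real n * real m * P)) = inverse (lam ^ n)"
  unfolding lam_def by (simp add: exp_minus exp_of_nat_mult[symmetric] mult.assoc)

lemma main:
  assumes h: "\<forall>j<m. uniform_limit Sg
              (\<lambda>n x. exp (- (real n * real m * P)) *
                 ((transfer_m {1..L} A D m j \<phi> ^^ n) (\<lambda>_. 1)) x) (h j) sequentially"
    and j: "j < m" and k: "k \<ge> 1" and x: "x \<in> Sg"
  shows "(transfer_Delta {1..L} A \<Delta> \<phi> ^^ k) (h j) x =
             (\<integral>y. (transfer_Delta {1..L} A \<Delta> \<phi> ^^ k) (\<lambda>_. 1) y \<partial>\<nu> ((j + k) mod m)) *
             h ((j + k) mod m) x"
proof -
  have Hc: "uniform_limit Sg (\<lambda>n x. inverse (lam ^ n) * Pw j' (n * m) (\<lambda>_. 1) x) (h j') sequentially"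
    if j': "j' < m" for j'
  proof -
    have "uniform_limit Sg (\<lambda>n x. exp (- (real n * real m * P)) *
                 ((transfer_m {1..L} A D m j' \<phi> ^^ n) (\<lambda>_. 1)) x) (h j') sequentially"
      using h j' by blast
    then show ?thesis
    proof (rule uniform_limit_cong'[THEN iffD1, rotated -1])
      fix n y assume y: "y \<in> Sg"
      show "exp (- (real n * real m * P)) * (transfer_m {1..L} A D m j' \<phi> ^^ n) (\<lambda>_. 1) y =
            inverse (lam ^ n) * Pw j' (n * m) (\<lambda>_. 1) y"
        using tm_iter[OF y, where j = j' and n = n and f = "\<lambda>_. 1"] exp_lam[of n] by simp
    qed simp
  qed
  define i where "i = (j + k) mod m"
  have i: "i < m" unfolding i_def using m_pos by simp
  define g where "g = Pw j k (\<lambda>_. 1)"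
  have gCB: "CB g" unfolding g_def by (rule goodD(5)[OF good_Pw CB_const])
  note Hi = Hc[OF i]
  have hi_eig: "eig lam i (h i)" by (rule GL(1)[OF i CB_const Hi])
  have hi_int: "(\<integral>x. h i x \<partial>\<nu> i) = 1"
  proof -
    interpret prob_space "\<nu> i" by (rule nu_prob[OF i])
    show ?thesis using GL(2)[OF i CB_const Hi] prob_space by simp
  qed
  have hnn: "0 \<le> h i y" if y: "y \<in> Sg" for y
  proof (rule LIMSEQ_le_const[OF tendsto_uniform_limitI[OF Hi y]])
    show "\<exists>N. \<forall>n\<ge>N. 0 \<le> inverse (lam ^ n) * Pw i (n * m) (\<lambda>_. 1) y"
      using goodD(4)[OF good_Pw _ y, of "\<lambda>_. 1"] lam_pos by simp
  qed
  have Hb: "\<exists>C. \<forall>n0. \<exists>n\<ge>n0. inverse (lam ^ n) * Pw i (n * m) (\<lambda>_. 1) y \<le> C" if y: "y \<in> Sg" for y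
  proof -
    have "\<forall>\<^sub>F n in sequentially. inverse (lam ^ n) * Pw i (n * m) (\<lambda>_. 1) y < h i y + 1"
      using order_tendstoD(2)[OF tendsto_uniform_limitI[OF Hi y]] by simp
    then obtain N where N: "\<And>n. n \<ge> N \<Longrightarrow> inverse (lam ^ n) * Pw i (n * m) (\<lambda>_. 1) y < h i y + 1"
      unfolding eventually_sequentially by blast
    show ?thesis
    proof (intro exI[of _ "h i y + 1"] allI)
      fix n0 show "\<exists>n\<ge>n0. inverse (lam ^ n) * Pw i (n * m) (\<lambda>_. 1) y \<le> h i y + 1"
        using N[of "max n0 N"] by (intro exI[of _ "max n0 N"]) auto
    qed
  qed
  have hiCB: "CB (h i)" using hi_eig unfolding eig_def by blast
  have hne: "\<exists>y\<in>Om i. h i y \<noteq> 0"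
  proof (rule ccontr)
    assume "\<not> ?thesis"
    then have "AE y in \<nu> i. h i y = 0" using nu_AE[OF i] by (auto elim: AE_mp)
    then have "(\<integral>y. h i y \<partial>\<nu> i) = (\<integral>y. 0 \<partial>\<nu> i)"
      by (intro integral_cong_AE) (auto intro: nu_meas[OF i hiCB])
    then show False using hi_int by simp
  qed
  let ?D = "op \<Delta> ^^ k"
  have gD: "good ?D" by (rule good_pow[OF good_op])
  have ul: "uniform_limit Sg (\<lambda>n. ?D (\<lambda>x. inverse (lam ^ n) * Pw j (n * m) (\<lambda>_. 1) x)) (?D (h j)) sequentially"
    by (rule good_ulim[OF gD Hc[OF j]])
  have Uc: "uniform_limit Sg (\<lambda>n x. inverse (lam ^ n) * Pw i (n * m) g x) (?D (h j)) sequentially"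
  proof (rule uniform_limit_cong[THEN iffD1, OF _ _ ul])
    show "\<forall>\<^sub>F n in sequentially. \<forall>x\<in>Sg. ?D (\<lambda>x. inverse (lam ^ n) * Pw j (n * m) (\<lambda>_. 1) x) x =
        inverse (lam ^ n) * Pw i (n * m) g x"
      unfolding eventually_sequentially
    proof (intro exI[of _ 1] allI impI ballI)
      fix n :: nat and x assume n: "1 \<le> n" and x: "x \<in> Sg"
      have nm: "n * m = Suc (n * m - 1)" using n m_pos by (simp add: Suc_le_eq)
      have "?D (\<lambda>x. inverse (lam ^ n) * Pw j (n * m) (\<lambda>_. 1) x) x = inverse (lam ^ n) * ?D (Pw j (n * m) (\<lambda>_. 1)) x"
        by (rule good_scale[OF gD x])
      also have "?D (Pw j (n * m) (\<lambda>_. 1)) = Pw j (k + n * m) (\<lambda>_. 1)"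
      proof -
        have "?D (Pw j (Suc (n * m - 1)) (\<lambda>_. 1)) = Pw j (Suc (n * m - 1) + k) (\<lambda>_. 1)" by (rule Delta_pow_Pw)
        then show ?thesis by (simp only: nm[symmetric] add.commute[of "n * m" k])
      qed
      also have "Pw j (k + n * m) (\<lambda>_. 1) = Pw (j + k) (n * m) g" unfolding g_def by (rule Pw_add)
      also have "Pw (j + k) (n * m) = Pw i (n * m)" unfolding i_def by (rule Pw_mod) simp
      finally show "?D (\<lambda>x. inverse (lam ^ n) * Pw j (n * m) (\<lambda>_. 1) x) x = inverse (lam ^ n) * Pw i (n * m) g x" .
    qed
  qed simp
  have u_eig: "eig lam i (?D (h j))" by (rule GL(1)[OF i gCB Uc])
  have u_int: "(\<integral>x. ?D (h j) x \<partial>\<nu> i) = (\<integral>x. g x \<partial>\<nu> i)" by (rule GL(2)[OF i gCB Uc])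
  obtain t where t: "\<And>y. y \<in> Sg \<Longrightarrow> ?D (h j) y = t * h i y"
    using uniqueness[OF lam_pos i u_eig hi_eig hnn hne Hb] by blast
  have "(\<integral>x. ?D (h j) x \<partial>\<nu> i) = (\<integral>x. t * h i x \<partial>\<nu> i)"
    by (rule Bochner_Integration.integral_cong[OF refl]) (simp add: nu_space[OF i] t)
  also have "\<dots> = t" using hi_int by simp
  finally have tg: "t = (\<integral>x. g x \<partial>\<nu> i)" using u_int by simp
  have "(\<integral>x. g x \<partial>\<nu> i) = (\<integral>x. ?D (\<lambda>_. 1) x \<partial>\<nu> i)"
  proof (rule integral_cong_AE)
    show "g \<in> borel_measurable (\<nu> i)" by (rule nu_meas[OF i gCB])
    show "?D (\<lambda>_. 1) \<in> borel_measurable (\<nu> i)" by (rule nu_meas[OF i goodD(5)[OF gD CB_const]])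
    show "AE x in \<nu> i. g x = ?D (\<lambda>_. 1) x"
      using nu_AE[OF i]
    proof (rule AE_mp, intro AE_I2 impI)
      fix y assume "y \<in> Om i"
      then have y: "y \<in> Sg" "y 0 \<in> D ((j + k) mod m)" using Om_Sg unfolding Omega_def i_def by auto
      show "g y = ?D (\<lambda>_. 1) y" unfolding g_def using Delta_pow_one[OF k y] by simp
    qed
  qed
  then show ?thesis
    unfolding transfer_Delta_op using t[OF x] tg unfolding i_def by simp
qed

end

theorem mainTheorem4:
  fixes L m :: nat and A :: "nat \<Rightarrow> nat \<Rightarrow> bool" and \<phi> :: "(nat \<Rightarrow> nat) \<Rightarrow> real"
    and \<Delta> :: "nat set" and D :: "nat \<Rightarrow> nat set" and P :: real
    and h :: "nat \<Rightarrow> (nat \<Rightarrow> nat) \<Rightarrow> real" and \<nu> :: "nat \<Rightarrow> (nat \<Rightarrow> nat) measure"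
  assumes l: "L \<ge> 1"
    and irrA: "irreducible_on {1..L} A"
    and aperA: "\<forall>i\<in>{1..L}. period {1..L} A i = 1"
    and holder: "holder_on (Sigma_sub {1..L} A) \<phi>"
    and normalised: "\<forall>x\<in>Sigma_sub {1..L} A. transfer {1..L} A \<phi> (\<lambda>_. 1) x = 1"
    and Delta_sub: "\<Delta> \<subset> {1..L}" and Delta_ne: "\<Delta> \<noteq> {}"
    and irrD: "irreducible_on \<Delta> A"
    and m: "m \<ge> 2"
    and perD: "\<forall>i\<in>\<Delta>. period \<Delta> A i = m"
    and cyc: "cyclic_decomposition \<Delta> A D m"
    and P: "P = pressure \<Delta> A \<phi>"
    and h: "\<forall>j<m. uniform_limit (Sigma_sub {1..L} A)
              (\<lambda>n x. exp (- (real n * real m * P)) *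
                 ((transfer_m {1..L} A D m j \<phi> ^^ n) (\<lambda>_. 1)) x) (h j) sequentially"
    and \<nu>: "\<forall>j<m. prob_space (\<nu> j) \<and>
              sets (\<nu> j) = sets (restrict_space borel (Sigma_sub {1..L} A)) \<and>
              emeasure (\<nu> j) (Omega \<Delta> A D j) = 1 \<and>
              (\<forall>\<psi>. continuous_on (Sigma_sub {1..L} A) \<psi> \<longrightarrow>
                 (\<integral>x. transfer_m {1..L} A D m j \<phi> \<psi> x \<partial>\<nu> j) =
                   exp (real m * P) * (\<integral>x. \<psi> x \<partial>\<nu> j))"
  shows "\<forall>j<m. \<forall>k\<ge>1. \<forall>x\<in>Sigma_sub {1..L} A.
           (transfer_Delta {1..L} A \<Delta> \<phi> ^^ k) (h j) x =
             (\<integral>y. (transfer_Delta {1..L} A \<Delta> \<phi> ^^ k) (\<lambda>_. 1) y \<partial>\<nu> ((j + k) mod m)) *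
             h ((j + k) mod m) x"
proof -
  interpret sftm L m A \<phi> \<Delta> D P \<nu>
  proof unfold_locales
    show "2 \<le> m" by (rule m)
    show "holder_on (Sigma_sub {1..L} A) \<phi>" by (rule holder)
    show "\<forall>x\<in>Sigma_sub {1..L} A. transfer {1..L} A \<phi> (\<lambda>_. 1) x = 1" by (rule normalised)
    show "\<Delta> \<subseteq> {1..L}" using Delta_sub by blast
    show "irreducible_on \<Delta> A" by (rule irrD)
    show "cyclic_decomposition \<Delta> A D m" by (rule cyc)
  qed (rule \<nu>)
  show ?thesis
  proof (intro allI impI ballI)
    fix j k :: nat and x assume "j < m" "1 \<le> k" "x \<in> Sigma_sub {1..L} A"
    then show "(transfer_Delta {1..L} A \<Delta> \<phi> ^^ k) (h j) x =
             (\<integral>y. (transfer_Delta {1..L} A \<Delta> \<phi> ^^ k) (\<lambda>_. 1) y \<partial>\<nu> ((j + k) mod m)) *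
             h ((j + k) mod m) x"
      by (rule main[OF h])
  qed
qed

end
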